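(* In the compound model below with arbitrary deterministic parameters (all $\lambda_i>0$), for every $n$ and every $\alpha\in[0,1]$, $$\frac1n\sum_{i\in\mathcal H_0}\mathbb P_{\boldsymbol\lambda}\big(\mathrm P^{VR}(T^{BF}_i,\hat\lambda_i;G(\boldsymbol\lambda))\le\alpha\big)\le\alpha,$$ where $G(\boldsymbol\lambda)=\frac1n\sum_{j=1}^n\delta_{\lambda_j}$ is the empirical distribution of $\lambda_1,\dots,\lambda_n$.
   Context: Fix integers $K_A,K_B\ge 2$, $\nu_A=K_A-1$, $\nu_B=K_B-1$. Compound model: the parameters $\mu_{iA},\mu_{iB}\in\mathbb R$, $\sigma^2_{iA},\sigma^2_{iB}>0$ ($i\le n$) are deterministic, $\lambda_i=\sigma^2_{iA}/\sigma^2_{iB}$, and the statistics $\hat\mu_{iA}\sim N(\mu_{iA},\sigma^2_{iA}/K_A)$, $\hat\sigma^2_{iA}\sim(\sigma^2_{iA}/\nu_A)\chi^2_{\nu_A}$, $\hat\mu_{iB}\sim N(\mu_{iB},\sigma^2_{iB}/K_B)$, $\hat\sigma^2_{iB}\sim(\sigma^2_{iB}/\nu_B)\chi^2_{\nu_B}$ are all independent; $\mathbb P_{\boldsymbol\lambda}$ is probability under this law. $\mathcal H_0=\{i\le n:\mu_{iA}=\mu_{iB}\}$. $\hat\lambda_i=\hat\sigma^2_{iA}/\hat\sigma^2_{iB}$, $T^{BF}_i=(\hat\mu_{iA}-\hat\mu_{iB})/\sqrt{\hat\sigma^2_{iA}/K_A+\hat\sigma^2_{iB}/K_B}$. $p(l\mid\lambda)=\frac{1}{\lambda}\frac{1}{B(\nu_A/2,\nu_B/2)}(\nu_A/\nu_B)^{\nu_A/2}(l/\lambda)^{\nu_A/2-1}(1+\nu_A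 l/(\nu_B\lambda))^{-(\nu_A+\nu_B)/2}$. $\mathrm P^{VR}(t,l;\lambda)=2F_{t,\nu_A+\nu_B}(-|t|/\phi(\lambda,l))$ with $F_{t,\nu}$ the Student-$t$ CDF, $\phi(\lambda,l)=\sqrt{(\nu_A c/\gamma+\nu_B(1-c)/(1-\gamma))/(\nu_A+\nu_B)}$, $c=l/(l+K_A/K_B)$, $\gamma=\lambda/(\lambda+K_A/K_B)$. Then $\mathrm P^{VR}(t,l;G(\boldsymbol\lambda))=\sum_{j=1}^n\mathrm P^{VR}(t,l;\lambda_j)p(l\mid\lambda_j)/\sum_{j=1}^n p(l\mid\lambda_j)$. *)

theory Defs
  imports "HOL-Probability.Probability"
begin

definition chi2_density :: "nat \<Rightarrow> real \<Rightarrow> real" where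
  "chi2_density k x = (if x > 0 then x powr (real k / 2 - 1) * exp (- x / 2)
       / (2 powr (real k / 2) * Gamma (real k / 2)) else 0)"

text \<open>Law of (s / nu) * chi2_nu, i.e. of a sample variance with true variance s.\<close>
definition scaled_chi2 :: "nat \<Rightarrow> real \<Rightarrow> real measure" where
  "scaled_chi2 nu s = distr (density lborel (chi2_density nu)) lborel (\<lambda>x. s / real nu * x)"

definition normal_law :: "real \<Rightarrow> real \<Rightarrow> real measure" where
  "normal_law m v = density lborel (normal_density m (sqrt v))"

definition student_t_density :: "nat \<Rightarrow> real \<Rightarrow> real" where
  "student_t_density nu x = Gamma ((real nu + 1) / 2) / (sqrt (real nu * pi) * Gamma (real nu / 2))
      * (1 + x\<^sup>2 / real nu) powr (- (real nu + 1) / 2)"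

definition student_t_cdf :: "nat \<Rightarrow> real \<Rightarrow> real" where
  "student_t_cdf nu t = (LINT x:{..t}|lborel. student_t_density nu x)"

text \<open>Joint law of (muhat_A, sigmahat2_A, muhat_B, sigmahat2_B) for one unit.\<close>
definition unit_law :: "nat \<Rightarrow> nat \<Rightarrow> real \<Rightarrow> real \<Rightarrow> real \<Rightarrow> real \<Rightarrow>
    (real \<times> real \<times> real \<times> real) measure" where
  "unit_law KA KB muA sA muB sB =
     normal_law muA (sA / real KA) \<Otimes>\<^sub>M
     (scaled_chi2 (KA - 1) sA \<Otimes>\<^sub>M
     (normal_law muB (sB / real KB) \<Otimes>\<^sub>M scaled_chi2 (KB - 1) sB))"

definition T_BF :: "nat \<Rightarrow> nat \<Rightarrow> real \<times> real \<times> real \<times> real \<Rightarrow> real" where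
  "T_BF KA KB w = (case w of (mA, sA, mB, sB) \<Rightarrow>
      (mA - mB) / sqrt (sA / real KA + sB / real KB))"

definition lam_hat :: "real \<times> real \<times> real \<times> real \<Rightarrow> real" where
  "lam_hat w = (case w of (mA, sA, mB, sB) \<Rightarrow> sA / sB)"

definition p_ratio :: "nat \<Rightarrow> nat \<Rightarrow> real \<Rightarrow> real \<Rightarrow> real" where
  "p_ratio KA KB l lam = (let nA = real (KA - 1); nB = real (KB - 1) in
     if l > 0 then
       1 / lam * (1 / Beta (nA / 2) (nB / 2)) * (nA / nB) powr (nA / 2)
       * (l / lam) powr (nA / 2 - 1) * (1 + nA * l / (nB * lam)) powr (- (nA + nB) / 2)
     else 0)"

definition phi_VR :: "nat \<Rightarrow> nat \<Rightarrow> real \<Rightarrow> real \<Rightarrow> real" where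
  "phi_VR KA KB lam l = (let nA = real (KA - 1); nB = real (KB - 1);
      c = l / (l + real KA / real KB); g = lam / (lam + real KA / real KB) in
      sqrt ((nA * c / g + nB * (1 - c) / (1 - g)) / (nA + nB)))"

definition P_VR :: "nat \<Rightarrow> nat \<Rightarrow> real \<Rightarrow> real \<Rightarrow> real \<Rightarrow> real" where
  "P_VR KA KB t l lam = 2 * student_t_cdf (KA - 1 + (KB - 1)) (- \<bar>t\<bar> / phi_VR KA KB lam l)"

text \<open>P^VR(t, l; G) with G the empirical distribution of lam 1, ..., lam n.\<close>
definition P_VR_G :: "nat \<Rightarrow> nat \<Rightarrow> nat \<Rightarrow> (nat \<Rightarrow> real) \<Rightarrow> real \<Rightarrow> real \<Rightarrow> real" where
  "P_VR_G KA KB n lam t l =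
     (\<Sum>j=1..n. P_VR KA KB t l (lam j) * p_ratio KA KB l (lam j)) / (\<Sum>j=1..n. p_ratio KA KB l (lam j))"

end

theory Submission
  imports Defs
begin


lemma gamma_nn:
  fixes k c :: real
  assumes "k > 0" "c > 0"
  shows "(\<integral>\<^sup>+t. ennreal (indicator {0<..} t * t powr (k-1) * exp (-c*t)) \<partial>lborel) = ennreal (Gamma k / c powr k)"
proof -
  have "ennreal (Gamma k) = (\<integral>\<^sup>+u. ennreal (indicator {0..} u * u powr (k - 1) / exp u) \<partial>lborel)"
    using Gamma_conv_nn_integral_real[OF assms(1)] by simp
  also have "\<dots> = ennreal c * (\<integral>\<^sup>+x. ennreal (indicator {0..} (0 + c*x) * (0 + c*x) powr (k - 1) / exp (0 + c*x)) \<partial>lborel)"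
    using assms by (subst nn_integral_real_affine[where c=c and t=0]) auto
  also have "(\<lambda>x. ennreal (indicator {0..} (0 + c*x) * (0 + c*x) powr (k - 1) / exp (0 + c*x)))
     = (\<lambda>x. ennreal (c powr (k-1)) * ennreal (indicator {0<..} x * x powr (k-1) * exp (-c*x)))"
  proof
    fix x show "ennreal (indicator {0..} (0 + c*x) * (0 + c*x) powr (k - 1) / exp (0 + c*x)) =
      ennreal (c powr (k-1)) * ennreal (indicator {0<..} x * x powr (k-1) * exp (-c*x))"
      using assms by (cases "x > 0") (auto simp: ennreal_mult'[symmetric] powr_mult exp_minus field_simps indicator_def zero_le_mult_iff)
  qed
  finally have "ennreal (Gamma k) = ennreal (c * c powr (k-1)) * (\<integral>\<^sup>+t. ennreal (indicator {0<..} t * t powr (k-1) * exp (-c*t)) \<partial>lborel)"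
    using assms by (simp add: nn_integral_cmult ennreal_mult' mult.assoc)
  also have "c * c powr (k-1) = c powr k" using assms by (simp add: powr_mult_base)
  finally have e: "ennreal (Gamma k) = ennreal (c powr k) * (\<integral>\<^sup>+t. ennreal (indicator {0<..} t * t powr (k-1) * exp (-c*t)) \<partial>lborel)" .
  have cp: "c powr k > 0" using assms by simp
  have "ennreal (Gamma k / c powr k) = ennreal (Gamma k) / ennreal (c powr k)"
    using cp assms by (simp add: divide_ennreal Gamma_real_pos less_imp_le)
  also have "\<dots> = (\<integral>\<^sup>+t. ennreal (indicator {0<..} t * t powr (k-1) * exp (-c*t)) \<partial>lborel)"
    unfolding e using cp by (subst mult.commute) (rule ennreal_mult_divide_eq, auto)
  finally show ?thesis by simp
qed

lemma chi2_nonneg: "chi2_density k x \<ge> 0"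
proof -
  have "Gamma (real k / 2) \<ge> 0"
    by (cases "k = 0") (auto intro: less_imp_le Gamma_real_pos)
  then show ?thesis unfolding chi2_density_def by (auto intro!: divide_nonneg_nonneg)
qed

lemma chi2_measurable[measurable]: "chi2_density k \<in> borel_measurable borel"
  unfolding chi2_density_def[abs_def] by measurable

lemma chi2_alt: "k > 0 \<Longrightarrow> chi2_density k x = (1 / (2 powr (real k / 2) * Gamma (real k / 2))) *
   (indicator {0<..} x * x powr (real k / 2 - 1) * exp (- (1/2) * x))"
  unfolding chi2_density_def by (auto simp: indicator_def field_simps)

lemma chi2_integral: assumes "k > 0" shows "(\<integral>\<^sup>+x. ennreal (chi2_density k x) \<partial>lborel) = 1"
proof -
  have g: "Gamma (real k / 2) > 0" using assms by (simp add: Gamma_real_pos)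
  have "(\<integral>\<^sup>+x. ennreal (chi2_density k x) \<partial>lborel) = (\<integral>\<^sup>+x. ennreal (1 / (2 powr (real k / 2) * Gamma (real k / 2))) *
     ennreal (indicator {0<..} x * x powr (real k / 2 - 1) * exp (- (1/2) * x)) \<partial>lborel)"
    using g by (intro nn_integral_cong, subst ennreal_mult'[symmetric]) (auto simp: chi2_alt[OF assms])
  also have "\<dots> = ennreal (1 / (2 powr (real k / 2) * Gamma (real k / 2))) * ennreal (Gamma (real k / 2) / (1/2) powr (real k / 2))"
    using assms gamma_nn[of "real k / 2" "1/2"] by (subst nn_integral_cmult) auto
  also have "\<dots> = 1" using g by (simp add: ennreal_mult'[symmetric] powr_divide)
  finally show ?thesis .
qed

lemma prob_space_chi2: "k > 0 \<Longrightarrow> prob_space (density lborel (chi2_density k))"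
  by standard (simp add: emeasure_density chi2_integral)

lemma sets_scaled_chi2[measurable_cong, simp]: "sets (scaled_chi2 k s) = sets borel"
  unfolding scaled_chi2_def by simp

lemma prob_space_scaled_chi2: "k > 0 \<Longrightarrow> prob_space (scaled_chi2 k s)"
  unfolding scaled_chi2_def by (rule prob_space.prob_space_distr[OF prob_space_chi2]) auto

lemma nn_integral_scaled_chi2:
  assumes [measurable]: "f \<in> borel_measurable borel"
  shows "(\<integral>\<^sup>+x. f x \<partial>scaled_chi2 k s) = (\<integral>\<^sup>+x. ennreal (chi2_density k x) * f (s / real k * x) \<partial>lborel)"
  unfolding scaled_chi2_def by (simp add: nn_integral_distr nn_integral_density)

lemma sets_normal_law[measurable_cong, simp]: "sets (normal_law m v) = sets borel"
  unfolding normal_law_def by simp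

lemma prob_space_normal_law: "v > 0 \<Longrightarrow> prob_space (normal_law m v)"
  unfolding normal_law_def by (rule prob_space_normal_density) simp

lemma nn_integral_normal_law:
  assumes [measurable]: "f \<in> borel_measurable borel"
  shows "(\<integral>\<^sup>+x. f x \<partial>normal_law m v) = (\<integral>\<^sup>+x. ennreal (normal_density m (sqrt v) x) * f x \<partial>lborel)"
  unfolding normal_law_def by (simp add: nn_integral_density)



lemma nn_shift:
  fixes f :: "real \<Rightarrow> ennreal"
  assumes "f \<in> borel_measurable borel"
  shows "(\<integral>\<^sup>+x. f x \<partial>lborel) = (\<integral>\<^sup>+d. f (t + d) \<partial>lborel)"
  using nn_integral_real_affine[OF assms, of 1 t] by simp

lemma nn_scale:
  fixes f :: "real \<Rightarrow> ennreal"
  assumes "f \<in> borel_measurable borel" "c > 0"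
  shows "(\<integral>\<^sup>+x. f x \<partial>lborel) = ennreal c * (\<integral>\<^sup>+d. f (c * d) \<partial>lborel)"
  using nn_integral_real_affine[OF assms(1), of c 0] assms(2) by simp

lemma normal_scale:
  fixes g :: "real \<Rightarrow> ennreal" and k :: real
  assumes [measurable]: "g \<in> borel_measurable borel" and k: "k > 0"
  shows "(\<integral>\<^sup>+d. ennreal (normal_density 0 k d) * g d \<partial>lborel) = (\<integral>\<^sup>+z. ennreal (std_normal_density z) * g (k * z) \<partial>lborel)"
proof -
  have "(\<integral>\<^sup>+d. ennreal (normal_density 0 k d) * g d \<partial>lborel) = ennreal k * (\<integral>\<^sup>+z. ennreal (normal_density 0 k (0 + k * z)) * g (0 + k * z) \<partial>lborel)"
    using k by (subst nn_integral_real_affine[where c=k and t=0]) auto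
  also have "\<dots> = (\<integral>\<^sup>+z. ennreal k * (ennreal (normal_density 0 k (0 + k * z)) * g (0 + k * z)) \<partial>lborel)"
    by (subst nn_integral_cmult) auto
  also have "\<dots> = (\<integral>\<^sup>+z. ennreal (std_normal_density z) * g (k * z) \<partial>lborel)"
  proof (rule nn_integral_cong)
    fix z :: real
    have "k * normal_density 0 k (k * z) = std_normal_density z"
      using k unfolding normal_density_def by (simp add: power_mult_distrib real_sqrt_mult field_simps)
    then show "ennreal k * (ennreal (normal_density 0 k (0 + k * z)) * g (0 + k * z)) = ennreal (std_normal_density z) * g (k * z)"
      using k by (simp add: mult.assoc[symmetric] ennreal_mult'[symmetric] normal_density_nonneg)
  qed
  finally show ?thesis .
qed

lemma normal_sym: "normal_density 0 s (- x) = normal_density 0 s x"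
  unfolding normal_density_def by simp

lemma normal_shift: "normal_density m s x = normal_density 0 s (x - m)"
  unfolding normal_density_def by simp

lemma normal_diff:
  fixes g :: "real \<Rightarrow> ennreal"
  assumes [measurable]: "g \<in> borel_measurable borel" and a: "a > 0" and b: "b > 0"
  shows "(\<integral>\<^sup>+x. ennreal (normal_density m a x) * (\<integral>\<^sup>+y. ennreal (normal_density m b y) * g (x - y) \<partial>lborel) \<partial>lborel)
       = (\<integral>\<^sup>+d. ennreal (normal_density 0 (sqrt (a\<^sup>2 + b\<^sup>2)) d) * g d \<partial>lborel)"
proof -
  have "(\<integral>\<^sup>+x. ennreal (normal_density m a x) * (\<integral>\<^sup>+y. ennreal (normal_density m b y) * g (x - y) \<partial>lborel) \<partial>lborel)
     = (\<integral>\<^sup>+x. \<integral>\<^sup>+y. ennreal (normal_density m a x) * ennreal (normal_density m b y) * g (x - y) \<partial>lborel \<partial>lborel)"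
    by (intro nn_integral_cong) (simp add: nn_integral_cmult[symmetric] mult.assoc)
  also have "\<dots> = (\<integral>\<^sup>+y. \<integral>\<^sup>+x. ennreal (normal_density m a x) * ennreal (normal_density m b y) * g (x - y) \<partial>lborel \<partial>lborel)"
    by (subst lborel_pair.Fubini') (auto simp: case_prod_unfold cong: measurable_cong_sets)
  also have "\<dots> = (\<integral>\<^sup>+y. \<integral>\<^sup>+d. ennreal (normal_density m a (y + d)) * ennreal (normal_density m b y) * g d \<partial>lborel \<partial>lborel)"
  proof (rule nn_integral_cong)
    fix y :: real
    show "(\<integral>\<^sup>+x. ennreal (normal_density m a x) * ennreal (normal_density m b y) * g (x - y) \<partial>lborel) =
      (\<integral>\<^sup>+d. ennreal (normal_density m a (y + d)) * ennreal (normal_density m b y) * g d \<partial>lborel)"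
      using nn_shift[of "\<lambda>x. ennreal (normal_density m a x) * ennreal (normal_density m b y) * g (x - y)" y] by simp
  qed
  also have "\<dots> = (\<integral>\<^sup>+d. \<integral>\<^sup>+y. ennreal (normal_density m a (y + d)) * ennreal (normal_density m b y) * g d \<partial>lborel \<partial>lborel)"
    by (subst lborel_pair.Fubini') (auto simp: case_prod_unfold cong: measurable_cong_sets)
  also have "\<dots> = (\<integral>\<^sup>+d. (\<integral>\<^sup>+y. ennreal (normal_density m a (y + d) * normal_density m b y) \<partial>lborel) * g d \<partial>lborel)"
    by (intro nn_integral_cong) (simp add: nn_integral_multc[symmetric] ennreal_mult' normal_density_nonneg)
  also have "\<dots> = (\<integral>\<^sup>+d. ennreal (normal_density 0 (sqrt (a\<^sup>2 + b\<^sup>2)) d) * g d \<partial>lborel)"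
  proof (rule nn_integral_cong)
    fix d :: real
    have "(\<integral>\<^sup>+y. ennreal (normal_density m a (y + d) * normal_density m b y) \<partial>lborel)
        = ennreal 1 * (\<integral>\<^sup>+u. ennreal (normal_density m a ((m + (-1) * u) + d) * normal_density m b (m + (-1) * u)) \<partial>lborel)"
      by (subst nn_integral_real_affine[where c="-1" and t=m]) auto
    also have "\<dots> = (\<integral>\<^sup>+u. ennreal (normal_density 0 a (d - u) * normal_density 0 b u) \<partial>lborel)"
      unfolding ennreal_1 mult_1 by (rule nn_integral_cong) (simp add: normal_density_def algebra_simps power2_commute)
    also have "\<dots> = normal_density 0 (sqrt (a\<^sup>2 + b\<^sup>2)) d"
      using conv_normal_density_zero_mean[OF a b] by metis
    finally show "(\<integral>\<^sup>+y. ennreal (normal_density m a (y + d) * normal_density m b y) \<partial>lborel) * g d = ennreal (normal_density 0 (sqrt (a\<^sup>2 + b\<^sup>2)) d) * g d" by simp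
  qed
  finally show ?thesis .
qed



lemma t_integrand:
  fixes x W :: real and k :: nat
  assumes k: "k > 0"
  defines "C \<equiv> 1 / (2 powr (real k / 2) * Gamma (real k / 2)) / sqrt (real k) / sqrt (2 * pi)"
  defines "c \<equiv> (1 + x\<^sup>2 / real k) / 2"
  shows "chi2_density k W * sqrt (W / real k) * std_normal_density (sqrt (W / real k) * x)
     = C * (indicator {0<..} W * W powr ((real k + 1) / 2 - 1) * exp (- c * W))"
proof (cases "W > 0")
  case False then show ?thesis by (simp add: chi2_density_def)
next
  case True
  have p: "W powr (real k / 2 - 1) * sqrt W = W powr ((real k + 1) / 2 - 1)"
    using True by (simp add: powr_half_sqrt[symmetric] powr_add[symmetric] field_simps)
  have e: "exp (- W / 2) * exp (- (sqrt (W / real k) * x)\<^sup>2 / 2) = exp (- c * W)"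
  proof -
    have sq: "(sqrt (W / real k) * x)\<^sup>2 = W / real k * x\<^sup>2" using True by (simp add: power_mult_distrib)
    have "- W / 2 + - (sqrt (W / real k) * x)\<^sup>2 / 2 = - c * W"
      unfolding sq c_def using k by (simp add: field_simps)
    then show ?thesis by (simp add: exp_add[symmetric])
  qed
  have "chi2_density k W * sqrt (W / real k) * std_normal_density (sqrt (W / real k) * x)
     = (W powr (real k / 2 - 1) * sqrt W) * (exp (- W / 2) * exp (- (sqrt (W / real k) * x)\<^sup>2 / 2))
       * (1 / (2 powr (real k / 2) * Gamma (real k / 2)) / sqrt (real k) / sqrt (2 * pi))"
    using True by (simp add: chi2_density_def std_normal_density_def real_sqrt_divide field_simps)
  also have "\<dots> = C * (indicator {0<..} W * W powr ((real k + 1) / 2 - 1) * exp (- c * W))"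
    unfolding p e C_def using True by simp
  finally show ?thesis .
qed

lemma t_const:
  fixes x :: real and k :: nat
  assumes k: "k > 0"
  shows "1 / (2 powr (real k / 2) * Gamma (real k / 2)) / sqrt (real k) / sqrt (2 * pi)
     * (Gamma ((real k + 1) / 2) / ((1 + x\<^sup>2 / real k) / 2) powr ((real k + 1) / 2))
     = student_t_density k x"
proof -
  define q where "q = 1 + x\<^sup>2 / real k"
  have q: "q > 0" using k by (simp add: q_def add_pos_nonneg)
  have g: "Gamma (real k / 2) > 0" using k by (simp add: Gamma_real_pos)
  have 1: "(q / 2) powr ((real k + 1) / 2) = q powr ((real k + 1) / 2) / (2 powr (real k / 2) * sqrt 2)"
    using q by (simp add: powr_divide powr_add[symmetric] powr_half_sqrt[symmetric] add_divide_distrib)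
  have 2: "q powr (- (real k + 1) / 2) = 1 / q powr ((real k + 1) / 2)"
  proof -
    have "- (real k + 1) / 2 = - ((real k + 1) / 2)" by (simp add: field_simps)
    then show ?thesis using q by (simp only: powr_minus_divide)
  qed
  have 3: "sqrt (real k * pi) * sqrt 2 = sqrt (real k) * sqrt (2 * pi)"
    by (simp add: real_sqrt_mult)
  show ?thesis
    unfolding student_t_density_def q_def[symmetric] 1 2
    using g q k by (simp add: field_simps real_sqrt_mult)
qed

lemma t_mix_density:
  fixes x :: real and k :: nat
  assumes k: "k > 0"
  shows "(\<integral>\<^sup>+W. ennreal (chi2_density k W * sqrt (W / real k) * std_normal_density (sqrt (W / real k) * x)) \<partial>lborel)
     = ennreal (student_t_density k x)"
proof -
  define C where "C = 1 / (2 powr (real k / 2) * Gamma (real k / 2)) / sqrt (real k) / sqrt (2 * pi)"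
  define c where "c = (1 + x\<^sup>2 / real k) / 2"
  have C: "C > 0" using k by (simp add: C_def Gamma_real_pos)
  have c: "c > 0" using k by (simp add: c_def add_pos_nonneg)
  have "(\<integral>\<^sup>+W. ennreal (chi2_density k W * sqrt (W / real k) * std_normal_density (sqrt (W / real k) * x)) \<partial>lborel)
     = (\<integral>\<^sup>+W. ennreal C * ennreal (indicator {0<..} W * W powr ((real k + 1) / 2 - 1) * exp (- c * W)) \<partial>lborel)"
    using C by (intro nn_integral_cong) (simp add: t_integrand[OF k] C_def c_def ennreal_mult'[symmetric])
  also have "\<dots> = ennreal C * ennreal (Gamma ((real k + 1) / 2) / c powr ((real k + 1) / 2))"
    using c gamma_nn[of "(real k + 1) / 2" c] by (subst nn_integral_cmult) auto
  also have "\<dots> = ennreal (student_t_density k x)"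
    using C by (simp add: ennreal_mult'[symmetric] t_const[OF k, of x, symmetric] C_def c_def)
  finally show ?thesis .
qed

lemma t_law:
  fixes h :: "real \<Rightarrow> ennreal" and k :: nat
  assumes k: "k > 0" and [measurable]: "h \<in> borel_measurable borel"
  shows "(\<integral>\<^sup>+W. ennreal (chi2_density k W) * (\<integral>\<^sup>+z. ennreal (std_normal_density z) * h (sqrt (real k / W) * z) \<partial>lborel) \<partial>lborel)
       = (\<integral>\<^sup>+x. ennreal (student_t_density k x) * h x \<partial>lborel)"
proof -
  have "(\<integral>\<^sup>+W. ennreal (chi2_density k W) * (\<integral>\<^sup>+z. ennreal (std_normal_density z) * h (sqrt (real k / W) * z) \<partial>lborel) \<partial>lborel)
     = (\<integral>\<^sup>+W. \<integral>\<^sup>+x. ennreal (chi2_density k W * sqrt (W / real k) * std_normal_density (sqrt (W / real k) * x)) * h x \<partial>lborel \<partial>lborel)"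
  proof (rule nn_integral_cong)
    fix W :: real
    show "ennreal (chi2_density k W) * (\<integral>\<^sup>+z. ennreal (std_normal_density z) * h (sqrt (real k / W) * z) \<partial>lborel)
      = (\<integral>\<^sup>+x. ennreal (chi2_density k W * sqrt (W / real k) * std_normal_density (sqrt (W / real k) * x)) * h x \<partial>lborel)"
    proof (cases "W > 0")
      case False then show ?thesis by (simp add: chi2_density_def)
    next
      case True
      define \<kappa> where "\<kappa> = sqrt (W / real k)"
      have kp: "\<kappa> > 0" using True k by (simp add: \<kappa>_def)
      have inv: "sqrt (real k / W) * \<kappa> = 1" using True k by (simp add: \<kappa>_def real_sqrt_mult[symmetric])
      have "(\<integral>\<^sup>+z. ennreal (std_normal_density z) * h (sqrt (real k / W) * z) \<partial>lborel)
          = ennreal \<kappa> * (\<integral>\<^sup>+x. ennreal (std_normal_density (\<kappa> * x)) * h (sqrt (real k / W) * (\<kappa> * x)) \<partial>lborel)"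
        using kp by (rule nn_scale[rotated]) simp
      also have "(\<lambda>x. ennreal (std_normal_density (\<kappa> * x)) * h (sqrt (real k / W) * (\<kappa> * x))) = (\<lambda>x. ennreal (std_normal_density (\<kappa> * x)) * h x)"
        by (simp add: mult.assoc[symmetric] inv)
      finally show ?thesis
        using kp chi2_nonneg[of k W]
        by (simp add: \<kappa>_def[symmetric] nn_integral_cmult[symmetric] mult.assoc[symmetric] ennreal_mult'[symmetric])
    qed
  qed
  also have "\<dots> = (\<integral>\<^sup>+x. \<integral>\<^sup>+W. ennreal (chi2_density k W * sqrt (W / real k) * std_normal_density (sqrt (W / real k) * x)) * h x \<partial>lborel \<partial>lborel)"
    by (subst lborel_pair.Fubini') (auto simp: case_prod_unfold cong: measurable_cong_sets)
  also have "\<dots> = (\<integral>\<^sup>+x. ennreal (student_t_density k x) * h x \<partial>lborel)"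
    by (rule nn_integral_cong) (simp add: nn_integral_multc t_mix_density[OF k])
  finally show ?thesis .
qed



definition bp :: "nat \<Rightarrow> nat \<Rightarrow> real \<Rightarrow> real" where
  "bp a b y = indicator {0<..} y * y powr (real a / 2 - 1) * (1 + y) powr (- (real a / 2 + real b / 2)) / Beta (real a / 2) (real b / 2)"

lemma bp_measurable[measurable]: "bp a b \<in> borel_measurable borel"
  unfolding bp_def[abs_def] by measurable

lemma density_identity:
  fixes y W :: real and a b :: nat
  assumes a: "a > 0" and b: "b > 0" and y: "y > 0"
  shows "1 / (1 + y) * (W / (1 + y) * chi2_density a (W / (1 + y) * y) * chi2_density b (W / (1 + y)))
       = bp a b y * chi2_density (a + b) W"
proof (cases "W > 0")
  case False
  then have "\<not> W / (1 + y) > 0" using y by (simp add: zero_less_divide_iff)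
  then show ?thesis using False by (simp add: chi2_density_def)
next
  case True
  define p where "p = real a / 2"
  define q where "q = real b / 2"
  define u where "u = W / (1 + y)"
  have p: "p > 0" and q: "q > 0" using a b by (auto simp: p_def q_def)
  have u: "u > 0" using True y by (simp add: u_def)
  have y1: "1 + y > 0" using y by simp
  have ga: "Gamma p > 0" "Gamma q > 0" "Gamma (p + q) > 0" using p q by (auto simp: Gamma_real_pos)
  have r1: "(u * y) powr (p - 1) = u powr (p - 1) * y powr (p - 1)" using u y by (simp add: powr_mult)
  have r2: "u * (u powr (p - 1) * u powr (q - 1)) = u powr (p + q - 1)"
  proof -
    have "u powr ((p - 1) + (q - 1) + 1) = u powr (p - 1) * u powr (q - 1) * u powr 1"
      by (simp only: powr_add)
    moreover have "(p - 1) + (q - 1) + 1 = p + q - 1" by simp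
    ultimately show ?thesis using u by (simp add: algebra_simps)
  qed
  have r3: "u powr (p + q - 1) = W powr (p + q - 1) / (1 + y) powr (p + q - 1)"
    using True y by (simp add: u_def powr_divide)
  have r4: "(1 + y) * (1 + y) powr (p + q - 1) = (1 + y) powr (p + q)"
  proof -
    have "(1 + y) powr ((p + q - 1) + 1) = (1 + y) powr (p + q - 1) * (1 + y) powr 1"
      by (simp only: powr_add)
    then show ?thesis using y1 by (simp add: algebra_simps)
  qed
  have r5: "(1 + y) powr (- (p + q)) = 1 / (1 + y) powr (p + q)" using y1 by (simp only: powr_minus_divide)
  have r5': "(1 + y) powr (p + q) * (1 + y) powr (- p - q) = 1"
    using y1 by (simp add: powr_add[symmetric])
  have r6: "exp (- (u * y) / 2) * exp (- u / 2) = exp (- W / 2)"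
  proof -
    have "u * (1 + y) = W" using y1 by (simp add: u_def)
    then have "- (u * y) / 2 + - u / 2 = - W / 2" by (simp add: algebra_simps add_divide_distrib[symmetric])
    then show ?thesis by (simp add: exp_add[symmetric])
  qed
  have r7: "(2::real) powr p * 2 powr q = 2 powr (p + q)" by (simp add: powr_add)
  have ab: "real (a + b) / 2 = p + q" by (simp add: p_def q_def add_divide_distrib)
  have lhs: "1 / (1 + y) * (W / (1 + y) * chi2_density a (W / (1 + y) * y) * chi2_density b (W / (1 + y)))
     = 1 / (1 + y) * (u * ((u * y) powr (p - 1) * exp (- (u * y) / 2) / (2 powr p * Gamma p))
         * (u powr (q - 1) * exp (- u / 2) / (2 powr q * Gamma q)))"
    using u y by (simp add: chi2_density_def u_def[symmetric] p_def q_def)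
  also have "\<dots> = (u * (u powr (p - 1) * u powr (q - 1))) * y powr (p - 1) * (exp (- (u * y) / 2) * exp (- u / 2))
      / ((1 + y) * (2 powr p * 2 powr q) * Gamma p * Gamma q)"
    unfolding r1 by (simp add: field_simps)
  also have "\<dots> = W powr (p + q - 1) * y powr (p - 1) * exp (- W / 2)
      / (((1 + y) * (1 + y) powr (p + q - 1)) * 2 powr (p + q) * Gamma p * Gamma q)"
    unfolding r2 r3 r6 r7 using y1 by (simp add: field_simps)
  also have "\<dots> = bp a b y * chi2_density (a + b) W"
    unfolding r4 bp_def chi2_density_def ab using y True ga
    by (simp add: p_def[symmetric] q_def[symmetric] r5' Beta_def field_simps)
  finally show ?thesis .
qed

lemma F_comp:
  fixes F :: "real \<Rightarrow> real \<Rightarrow> 'b::topological_space"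
  assumes Fm: "case_prod F \<in> borel_measurable borel"
    and [measurable]: "f \<in> borel_measurable M" "g \<in> borel_measurable M"
  shows "(\<lambda>x. F (f x) (g x)) \<in> borel_measurable M"
proof -
  have "(\<lambda>x. (f x, g x)) \<in> measurable M (borel \<Otimes>\<^sub>M borel)" by measurable
  then have "(\<lambda>x. (f x, g x)) \<in> measurable M borel" by (simp add: borel_prod)
  from measurable_compose[OF this Fm] show ?thesis by simp
qed

lemma chi_ratio:
  fixes F :: "real \<Rightarrow> real \<Rightarrow> ennreal" and a b :: nat
  assumes a: "a > 0" and b: "b > 0"
    and Fm: "case_prod F \<in> borel_measurable borel"
  shows "(\<integral>\<^sup>+U. ennreal (chi2_density a U) * (\<integral>\<^sup>+V. ennreal (chi2_density b V) * F U V \<partial>lborel) \<partial>lborel)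
       = (\<integral>\<^sup>+y. ennreal (bp a b y) * (\<integral>\<^sup>+W. ennreal (chi2_density (a + b) W) * F (W / (1 + y) * y) (W / (1 + y)) \<partial>lborel) \<partial>lborel)"
proof -
  note F_comp[OF Fm, measurable]
  have "(\<integral>\<^sup>+U. ennreal (chi2_density a U) * (\<integral>\<^sup>+V. ennreal (chi2_density b V) * F U V \<partial>lborel) \<partial>lborel)
      = (\<integral>\<^sup>+U. \<integral>\<^sup>+V. ennreal (chi2_density a U) * (ennreal (chi2_density b V) * F U V) \<partial>lborel \<partial>lborel)"
    by (rule nn_integral_cong) (simp add: nn_integral_cmult)
  also have "\<dots> = (\<integral>\<^sup>+V. \<integral>\<^sup>+U. ennreal (chi2_density a U) * (ennreal (chi2_density b V) * F U V) \<partial>lborel \<partial>lborel)"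
    by (subst lborel_pair.Fubini') (auto simp: case_prod_unfold cong: measurable_cong_sets)
  also have "\<dots> = (\<integral>\<^sup>+V. \<integral>\<^sup>+y. ennreal (V * chi2_density a (V * y) * chi2_density b V) * F (V * y) V \<partial>lborel \<partial>lborel)"
  proof (rule nn_integral_cong)
    fix V :: real
    show "(\<integral>\<^sup>+U. ennreal (chi2_density a U) * (ennreal (chi2_density b V) * F U V) \<partial>lborel)
        = (\<integral>\<^sup>+y. ennreal (V * chi2_density a (V * y) * chi2_density b V) * F (V * y) V \<partial>lborel)"
    proof (cases "V > 0")
      case False then show ?thesis by (simp add: chi2_density_def)
    next
      case True
      have "(\<integral>\<^sup>+U. ennreal (chi2_density a U) * (ennreal (chi2_density b V) * F U V) \<partial>lborel)
          = ennreal V * (\<integral>\<^sup>+y. ennreal (chi2_density a (V * y)) * (ennreal (chi2_density b V) * F (V * y) V) \<partial>lborel)"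
        using True by (rule nn_scale[rotated]) simp
      also have "\<dots> = (\<integral>\<^sup>+y. ennreal (V * chi2_density a (V * y) * chi2_density b V) * F (V * y) V \<partial>lborel)"
        using True by (subst nn_integral_cmult[symmetric]) (auto intro!: nn_integral_cong simp: ennreal_mult chi2_nonneg mult.assoc)
      finally show ?thesis .
    qed
  qed
  also have "\<dots> = (\<integral>\<^sup>+y. \<integral>\<^sup>+V. ennreal (V * chi2_density a (V * y) * chi2_density b V) * F (V * y) V \<partial>lborel \<partial>lborel)"
    by (subst lborel_pair.Fubini') (auto simp: case_prod_unfold cong: measurable_cong_sets)
  also have "\<dots> = (\<integral>\<^sup>+y. ennreal (bp a b y) * (\<integral>\<^sup>+W. ennreal (chi2_density (a + b) W) * F (W / (1 + y) * y) (W / (1 + y)) \<partial>lborel) \<partial>lborel)"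
  proof (rule nn_integral_cong)
    fix y :: real
    show "(\<integral>\<^sup>+V. ennreal (V * chi2_density a (V * y) * chi2_density b V) * F (V * y) V \<partial>lborel)
      = ennreal (bp a b y) * (\<integral>\<^sup>+W. ennreal (chi2_density (a + b) W) * F (W / (1 + y) * y) (W / (1 + y)) \<partial>lborel)"
    proof (cases "y > 0")
      case False
      have z: "\<And>V. V * chi2_density a (V * y) * chi2_density b V = 0"
      proof -
        fix V :: real
        show "V * chi2_density a (V * y) * chi2_density b V = 0"
        proof (cases "V > 0")
          case True
          then have "\<not> V * y > 0" using False by (simp add: zero_less_mult_iff)
          then show ?thesis by (simp add: chi2_density_def)
        qed (simp add: chi2_density_def)
      qed
      moreover have "bp a b y = 0" using False by (simp add: bp_def)
      ultimately show ?thesis by (simp only: z ennreal_0 mult_zero_left nn_integral_0_iff_AE) simp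
    next
      case True
      have c: "1 / (1 + y) > 0" using True by simp
      have "(\<integral>\<^sup>+V. ennreal (V * chi2_density a (V * y) * chi2_density b V) * F (V * y) V \<partial>lborel)
         = ennreal (1 / (1 + y)) * (\<integral>\<^sup>+W. ennreal (1 / (1 + y) * W * chi2_density a (1 / (1 + y) * W * y) * chi2_density b (1 / (1 + y) * W)) * F (1 / (1 + y) * W * y) (1 / (1 + y) * W) \<partial>lborel)"
        using c by (rule nn_scale[rotated]) simp
      also have "\<dots> = (\<integral>\<^sup>+W. ennreal (1 / (1 + y) * (W / (1 + y) * chi2_density a (W / (1 + y) * y) * chi2_density b (W / (1 + y)))) * F (W / (1 + y) * y) (W / (1 + y)) \<partial>lborel)"
        using c by (subst nn_integral_cmult[symmetric]) (auto intro!: nn_integral_cong simp: ennreal_mult'[symmetric] mult.assoc[symmetric])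
      also have "\<dots> = (\<integral>\<^sup>+W. ennreal (bp a b y) * (ennreal (chi2_density (a + b) W) * F (W / (1 + y) * y) (W / (1 + y))) \<partial>lborel)"
      proof (rule nn_integral_cong)
        fix W :: real
        show "ennreal (1 / (1 + y) * (W / (1 + y) * chi2_density a (W / (1 + y) * y) * chi2_density b (W / (1 + y)))) * F (W / (1 + y) * y) (W / (1 + y))
            = ennreal (bp a b y) * (ennreal (chi2_density (a + b) W) * F (W / (1 + y) * y) (W / (1 + y)))"
          unfolding density_identity[OF a b True, of W] by (simp add: ennreal_mult'' chi2_nonneg mult.assoc)
      qed
      also have "\<dots> = ennreal (bp a b y) * (\<integral>\<^sup>+W. ennreal (chi2_density (a + b) W) * F (W / (1 + y) * y) (W / (1 + y)) \<partial>lborel)"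
        by (subst nn_integral_cmult) auto
      finally show ?thesis .
    qed
  qed
  finally show ?thesis .
qed

lemma bp_nonneg: "a > 0 \<Longrightarrow> b > 0 \<Longrightarrow> bp a b y \<ge> 0"
  unfolding bp_def Beta_def by (auto intro!: divide_nonneg_pos mult_pos_pos Gamma_real_pos)

lemma powr_times_self: "x > 0 \<Longrightarrow> x * x powr (p - 1) = x powr (p::real)"
proof -
  assume x: "x > 0"
  have "x powr ((p - 1) + 1) = x powr (p - 1) * x powr 1" by (simp only: powr_add)
  then show ?thesis using x by (simp add: mult.commute)
qed

lemma p_ratio_identity:
  fixes l lam :: real and KA KB :: nat
  assumes KA: "KA \<ge> 2" and KB: "KB \<ge> 2" and lam: "lam > 0"
  defines "\<kappa> \<equiv> real (KA - 1) / (real (KB - 1) * lam)"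
  shows "\<kappa> * bp (KA - 1) (KB - 1) (\<kappa> * l) = p_ratio KA KB l lam"
proof (cases "l > 0")
  case False
  have "\<kappa> > 0" using KA KB lam by (simp add: \<kappa>_def)
  then have "\<not> \<kappa> * l > 0" using False by (simp add: zero_less_mult_iff)
  then show ?thesis using False by (simp add: bp_def p_ratio_def)
next
  case True
  define nA where "nA = real (KA - 1)"
  define nB where "nB = real (KB - 1)"
  define p where "p = nA / 2"
  define q where "q = nB / 2"
  have nA: "nA > 0" and nB: "nB > 0" using KA KB by (auto simp: nA_def nB_def)
  have k: "\<kappa> > 0" using KA KB lam by (simp add: \<kappa>_def)
  have kl: "\<kappa> * l = nA * l / (nB * lam)" by (simp add: \<kappa>_def nA_def nB_def)
  have e: "- (nA + nB) / 2 = - (p + q)" by (simp add: p_def q_def field_simps)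
  have r1: "(\<kappa> * l) powr (p - 1) = \<kappa> powr (p - 1) * l powr (p - 1)" using k True by (simp add: powr_mult)
  have r2: "\<kappa> powr p = (nA / nB) powr p / lam powr p"
  proof -
    have "\<kappa> = (nA / nB) / lam" by (simp add: \<kappa>_def nA_def nB_def field_simps)
    then show ?thesis using nA nB lam by (simp add: powr_divide powr_mult)
  qed
  have r3: "(l / lam) powr (p - 1) = l powr (p - 1) / lam powr (p - 1)" using True lam by (simp add: powr_divide)
  have lp: "lam powr (p - 1) > 0" using lam by simp
  have "\<kappa> * bp (KA - 1) (KB - 1) (\<kappa> * l) = (\<kappa> * \<kappa> powr (p - 1)) * l powr (p - 1) * (1 + \<kappa> * l) powr (- (p + q)) / Beta p q"
  proof -
    have pA: "real (KA - 1) / 2 = p" and qB: "real (KB - 1) / 2 = q" by (simp_all add: p_def q_def nA_def nB_def)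
    have "\<kappa> * bp (KA - 1) (KB - 1) (\<kappa> * l) = \<kappa> * ((\<kappa> * l) powr (p - 1) * (1 + \<kappa> * l) powr (- (p + q)) / Beta p q)"
      unfolding bp_def pA qB using True k by simp
    then show ?thesis unfolding r1 by simp
  qed
  also have "\<dots> = p_ratio KA KB l lam"
  proof -
    have lpp: "lam powr p = lam * lam powr (p - 1)" using powr_times_self[OF lam] by simp
    have bt: "Beta p q > 0" using nA nB unfolding Beta_def p_def q_def by (auto intro!: divide_pos_pos mult_pos_pos Gamma_real_pos)
    have pr: "p_ratio KA KB l lam = 1 / lam * (1 / Beta p q) * (nA / nB) powr p * (l / lam) powr (p - 1) * (1 + nA * l / (nB * lam)) powr (- (nA + nB) / 2)"
      unfolding p_ratio_def Let_def nA_def[symmetric] nB_def[symmetric] p_def[symmetric] q_def[symmetric] using True by simp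
    show ?thesis
      unfolding pr e r3 powr_times_self[OF k] r2 kl lpp
      using lam lp bt by (simp add: field_simps)
  qed
  finally show ?thesis .
qed

lemma f_scale:
  fixes H :: "real \<Rightarrow> ennreal" and KA KB :: nat and lam :: real
  assumes KA: "KA \<ge> 2" and KB: "KB \<ge> 2" and lam: "lam > 0" and [measurable]: "H \<in> borel_measurable borel"
  shows "(\<integral>\<^sup>+y. ennreal (bp (KA - 1) (KB - 1) y) * H (lam * real (KB - 1) / real (KA - 1) * y) \<partial>lborel)
       = (\<integral>\<^sup>+l. ennreal (p_ratio KA KB l lam) * H l \<partial>lborel)"
proof -
  define \<kappa> where "\<kappa> = real (KA - 1) / (real (KB - 1) * lam)"
  have k: "\<kappa> > 0" using KA KB lam by (simp add: \<kappa>_def)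
  have inv: "lam * real (KB - 1) / real (KA - 1) * \<kappa> = 1" using KA KB lam by (simp add: \<kappa>_def)
  have "(\<integral>\<^sup>+y. ennreal (bp (KA - 1) (KB - 1) y) * H (lam * real (KB - 1) / real (KA - 1) * y) \<partial>lborel)
     = ennreal \<kappa> * (\<integral>\<^sup>+l. ennreal (bp (KA - 1) (KB - 1) (\<kappa> * l)) * H (lam * real (KB - 1) / real (KA - 1) * (\<kappa> * l)) \<partial>lborel)"
    using k by (rule nn_scale[rotated]) simp
  also have "\<dots> = (\<integral>\<^sup>+l. ennreal (\<kappa> * bp (KA - 1) (KB - 1) (\<kappa> * l)) * H l \<partial>lborel)"
  proof -
    have a: "\<And>l. lam * real (KB - 1) / real (KA - 1) * (\<kappa> * l) = l" using inv by (metis mult.assoc mult_1)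
    have b: "\<And>l. ennreal (\<kappa> * bp (KA - 1) (KB - 1) (\<kappa> * l)) = ennreal \<kappa> * ennreal (bp (KA - 1) (KB - 1) (\<kappa> * l))"
    proof -
      fix l
      have "bp (KA - 1) (KB - 1) (\<kappa> * l) \<ge> 0" using KA KB by (intro bp_nonneg) auto
      then show "ennreal (\<kappa> * bp (KA - 1) (KB - 1) (\<kappa> * l)) = ennreal \<kappa> * ennreal (bp (KA - 1) (KB - 1) (\<kappa> * l))"
        using k by (simp add: ennreal_mult)
    qed
    show ?thesis unfolding a b by (subst nn_integral_cmult[symmetric]) (auto simp: mult.assoc)
  qed
  also have "\<dots> = (\<integral>\<^sup>+l. ennreal (p_ratio KA KB l lam) * H l \<partial>lborel)"
    unfolding \<kappa>_def p_ratio_identity[OF KA KB lam] ..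
  finally show ?thesis .
qed



lemma ratio_identity:
  fixes s r a b KA KB y W :: real
  assumes s: "s > 0" and r: "r > 0" and a: "a > 0" and b: "b > 0" and KA: "KA > 0" and KB: "KB > 0"
    and y: "y > 0" and W: "W > 0"
  defines "l \<equiv> s / r * b / a * y"
  defines "c \<equiv> l / (l + KA / KB)"
  defines "g \<equiv> (s / r) / (s / r + KA / KB)"
  shows "(s / KA + r / KB) / ((s / a * (W / (1 + y) * y)) / KA + (r / b * (W / (1 + y))) / KB)
       = (a * c / g + b * (1 - c) / (1 - g)) / W"
proof -
  define L where "L = s / r"
  define q where "q = KA / KB"
  have L: "L > 0" and q: "q > 0" using s r KA KB by (simp_all add: L_def q_def)
  have l: "l > 0" using s r a b y by (simp add: l_def)
  have ll: "l = L * b / a * y" by (simp add: l_def L_def)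
  have c1: "c / g = l * (L + q) / (L * (l + q))"
    using l L q by (simp add: c_def g_def L_def[symmetric] q_def[symmetric] field_simps)
  have c2: "(1 - c) / (1 - g) = (L + q) / (l + q)"
  proof -
    have lq: "l + q > 0" "L + q > 0" using l L q by simp_all
    have e1: "1 - c = q / (l + q)" using lq by (simp add: c_def q_def[symmetric] field_simps)
    have e2: "1 - g = q / (L + q)" using lq by (simp add: g_def L_def[symmetric] q_def[symmetric] field_simps)
    show ?thesis unfolding e1 e2 using lq q by (simp add: divide_simps)
  qed
  have c3: "a * l / L = b * y" using L a by (simp add: ll field_simps)
  have "a * c / g + b * (1 - c) / (1 - g) = (L + q) / (l + q) * (a * l / L + b)"
    unfolding times_divide_eq_right[symmetric] c1 c2 using l L q by (simp add: divide_simps) (simp add: algebra_simps)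
  also have "\<dots> = (L + q) / (l + q) * (b * (1 + y))" unfolding c3 by (simp add: algebra_simps)
  finally have e: "a * c / g + b * (1 - c) / (1 - g) = (L + q) / (l + q) * (b * (1 + y))" .
  have y1: "1 + y > 0" using y by simp
  have hN: "s / KA + r / KB = r / KA * (L + q)" using r KA KB by (simp add: L_def q_def field_simps)
  have hD': "\<And>Y. Y > 0 \<Longrightarrow> (s / a * (W / Y * y)) / KA + (r / b * (W / Y)) / KB = W / Y * (r / KA) * (L / a * y + q / b)"
    using r KA KB a b by (simp add: L_def q_def field_simps)
  note hD = hD'[OF y1]
  have pos: "L / a * y + q / b > 0" using L q a b y by (simp add: add_pos_pos)
  have "(s / KA + r / KB) / ((s / a * (W / (1 + y) * y)) / KA + (r / b * (W / (1 + y))) / KB)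
     = (L + q) * (1 + y) / (W * (L / a * y + q / b))"
    unfolding hN hD using r KA W y1 pos by (simp add: divide_simps)
  also have "\<dots> = (L + q) / (l + q) * (b * (1 + y)) / W"
  proof -
    have "L / a * y + q / b = (l + q) / b" using a b by (simp add: ll field_simps)
    then show ?thesis using b W l q y1 by (simp add: divide_simps)
  qed
  finally show ?thesis unfolding e .
qed

lemma nn_integral_prod4:
  assumes P2: "prob_space M2" and P3: "prob_space M3" and P4: "prob_space M4"
    and G: "G \<in> borel_measurable (M1 \<Otimes>\<^sub>M (M2 \<Otimes>\<^sub>M (M3 \<Otimes>\<^sub>M M4)))"
  shows "integral\<^sup>N (M1 \<Otimes>\<^sub>M (M2 \<Otimes>\<^sub>M (M3 \<Otimes>\<^sub>M M4))) G
    = (\<integral>\<^sup>+x1. \<integral>\<^sup>+x2. \<integral>\<^sup>+x3. \<integral>\<^sup>+x4. G (x1, x2, x3, x4) \<partial>M4 \<partial>M3 \<partial>M2 \<partial>M1)"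
proof -
  have P34: "prob_space (M3 \<Otimes>\<^sub>M M4)" by (rule prob_space_pair[OF P3 P4])
  have P234: "prob_space (M2 \<Otimes>\<^sub>M (M3 \<Otimes>\<^sub>M M4))" by (rule prob_space_pair[OF P2 P34])
  have "integral\<^sup>N (M1 \<Otimes>\<^sub>M (M2 \<Otimes>\<^sub>M (M3 \<Otimes>\<^sub>M M4))) G = (\<integral>\<^sup>+x1. \<integral>\<^sup>+p. G (x1, p) \<partial>(M2 \<Otimes>\<^sub>M (M3 \<Otimes>\<^sub>M M4)) \<partial>M1)"
    by (rule sigma_finite_measure.nn_integral_fst[symmetric, OF prob_space_imp_sigma_finite[OF P234] G])
  also have "\<dots> = (\<integral>\<^sup>+x1. \<integral>\<^sup>+x2. \<integral>\<^sup>+q. G (x1, x2, q) \<partial>(M3 \<Otimes>\<^sub>M M4) \<partial>M2 \<partial>M1)"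
  proof (rule nn_integral_cong)
    fix x1 assume x1: "x1 \<in> space M1"
    have m: "(\<lambda>p. G (x1, p)) \<in> borel_measurable (M2 \<Otimes>\<^sub>M (M3 \<Otimes>\<^sub>M M4))" using measurable_Pair2[OF G x1] .
    show "(\<integral>\<^sup>+p. G (x1, p) \<partial>(M2 \<Otimes>\<^sub>M (M3 \<Otimes>\<^sub>M M4))) = (\<integral>\<^sup>+x2. \<integral>\<^sup>+q. G (x1, x2, q) \<partial>(M3 \<Otimes>\<^sub>M M4) \<partial>M2)"
      using sigma_finite_measure.nn_integral_fst[symmetric, OF prob_space_imp_sigma_finite[OF P34] m] by simp
  qed
  also have "\<dots> = (\<integral>\<^sup>+x1. \<integral>\<^sup>+x2. \<integral>\<^sup>+x3. \<integral>\<^sup>+x4. G (x1, x2, x3, x4) \<partial>M4 \<partial>M3 \<partial>M2 \<partial>M1)"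
  proof (rule nn_integral_cong, rule nn_integral_cong)
    fix x1 x2 assume x1: "x1 \<in> space M1" and x2: "x2 \<in> space M2"
    have m: "(\<lambda>p. G (x1, p)) \<in> borel_measurable (M2 \<Otimes>\<^sub>M (M3 \<Otimes>\<^sub>M M4))" using measurable_Pair2[OF G x1] .
    have m2: "(\<lambda>q. G (x1, x2, q)) \<in> borel_measurable (M3 \<Otimes>\<^sub>M M4)" using measurable_Pair2[OF m x2] .
    show "(\<integral>\<^sup>+q. G (x1, x2, q) \<partial>(M3 \<Otimes>\<^sub>M M4)) = (\<integral>\<^sup>+x3. \<integral>\<^sup>+x4. G (x1, x2, x3, x4) \<partial>M4 \<partial>M3)"
      using sigma_finite_measure.nn_integral_fst[symmetric, OF prob_space_imp_sigma_finite[OF P4] m2] by simp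
  qed
  finally show ?thesis .
qed

lemma case_prod_meas:
  fixes h :: "real \<Rightarrow> real \<Rightarrow> ennreal"
  shows "(\<lambda>p. h (fst p) (snd p)) \<in> borel_measurable (borel \<Otimes>\<^sub>M borel) \<Longrightarrow> case_prod h \<in> borel_measurable borel"
  by (simp add: borel_prod case_prod_beta')

lemma swap_dens:
  fixes \<alpha> \<beta> :: "real \<Rightarrow> real" and h :: "real \<Rightarrow> real \<Rightarrow> ennreal"
  assumes [measurable]: "\<alpha> \<in> borel_measurable borel" "\<beta> \<in> borel_measurable borel"
    and hm: "case_prod h \<in> borel_measurable borel"
  shows "(\<integral>\<^sup>+x. ennreal (\<alpha> x) * (\<integral>\<^sup>+y. ennreal (\<beta> y) * h x y \<partial>lborel) \<partial>lborel)
       = (\<integral>\<^sup>+y. ennreal (\<beta> y) * (\<integral>\<^sup>+x. ennreal (\<alpha> x) * h x y \<partial>lborel) \<partial>lborel)"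
proof -
  note F_comp[OF hm, measurable]
  have "(\<integral>\<^sup>+x. ennreal (\<alpha> x) * (\<integral>\<^sup>+y. ennreal (\<beta> y) * h x y \<partial>lborel) \<partial>lborel)
      = (\<integral>\<^sup>+x. \<integral>\<^sup>+y. ennreal (\<alpha> x) * (ennreal (\<beta> y) * h x y) \<partial>lborel \<partial>lborel)"
    by (rule nn_integral_cong) (simp add: nn_integral_cmult)
  also have "\<dots> = (\<integral>\<^sup>+y. \<integral>\<^sup>+x. ennreal (\<alpha> x) * (ennreal (\<beta> y) * h x y) \<partial>lborel \<partial>lborel)"
    by (subst lborel_pair.Fubini') (auto simp: case_prod_unfold cong: measurable_cong_sets)
  also have "\<dots> = (\<integral>\<^sup>+y. ennreal (\<beta> y) * (\<integral>\<^sup>+x. ennreal (\<alpha> x) * h x y \<partial>lborel) \<partial>lborel)"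
    by (rule nn_integral_cong) (simp add: nn_integral_cmult[symmetric] mult.left_commute)
  finally show ?thesis .
qed

lemma T_BF_simp: "T_BF KA KB (mA, sA, mB, sB) = (mA - mB) / sqrt (sA / real KA + sB / real KB)"
  by (simp add: T_BF_def)

lemma lam_hat_simp: "lam_hat (mA, sA, mB, sB) = sA / sB"
  by (simp add: lam_hat_def)



lemma unit_law_step1:
  fixes f :: "real \<Rightarrow> real \<Rightarrow> ennreal" and KA KB :: nat and \<mu> s r :: real
  assumes KA: "KA \<ge> 2" and KB: "KB \<ge> 2" and s: "s > 0" and r: "r > 0"
    and fm: "case_prod f \<in> borel_measurable borel"
  shows "(\<integral>\<^sup>+w. f (T_BF KA KB w) (lam_hat w) \<partial>unit_law KA KB \<mu> s \<mu> r)
    = (\<integral>\<^sup>+mA. ennreal (normal_density \<mu> (sqrt (s / real KA)) mA) *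
        (\<integral>\<^sup>+U. ennreal (chi2_density (KA - 1) U) *
          (\<integral>\<^sup>+mB. ennreal (normal_density \<mu> (sqrt (r / real KB)) mB) *
            (\<integral>\<^sup>+V. ennreal (chi2_density (KB - 1) V) *
               f ((mA - mB) / sqrt (s / real (KA - 1) * U / real KA + r / real (KB - 1) * V / real KB))
                 (s / real (KA - 1) * U / (r / real (KB - 1) * V)) \<partial>lborel) \<partial>lborel) \<partial>lborel) \<partial>lborel)" (is "?L = ?R")
proof -
  note F_comp[OF fm, measurable]
  have pA: "prob_space (scaled_chi2 (KA - 1) s)" using KA by (intro prob_space_scaled_chi2) simp
  have pB: "prob_space (scaled_chi2 (KB - 1) r)" using KB by (intro prob_space_scaled_chi2) simp
  have pN: "prob_space (normal_law \<mu> (r / real KB))" using KB r by (intro prob_space_normal_law) simp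
  have sets: "sets (normal_law \<mu> (s / real KA) \<Otimes>\<^sub>M (scaled_chi2 (KA - 1) s \<Otimes>\<^sub>M (normal_law \<mu> (r / real KB) \<Otimes>\<^sub>M scaled_chi2 (KB - 1) r)))
     = sets (borel \<Otimes>\<^sub>M (borel \<Otimes>\<^sub>M (borel \<Otimes>\<^sub>M borel)))"
    by (intro sets_pair_measure_cong) simp_all
  have "(\<lambda>w. f (T_BF KA KB w) (lam_hat w)) \<in> borel_measurable (borel \<Otimes>\<^sub>M (borel \<Otimes>\<^sub>M (borel \<Otimes>\<^sub>M (borel::real measure))))"
    unfolding T_BF_def lam_hat_def by measurable
  then have Gm: "(\<lambda>w. f (T_BF KA KB w) (lam_hat w)) \<in> borel_measurable (normal_law \<mu> (s / real KA) \<Otimes>\<^sub>M (scaled_chi2 (KA - 1) s \<Otimes>\<^sub>M (normal_law \<mu> (r / real KB) \<Otimes>\<^sub>M scaled_chi2 (KB - 1) r)))"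
    by (subst measurable_cong_sets[OF sets refl])
  have "(\<integral>\<^sup>+w. f (T_BF KA KB w) (lam_hat w) \<partial>unit_law KA KB \<mu> s \<mu> r)
     = (\<integral>\<^sup>+mA. \<integral>\<^sup>+sA. \<integral>\<^sup>+mB. \<integral>\<^sup>+sB. f ((mA - mB) / sqrt (sA / real KA + sB / real KB)) (sA / sB)
          \<partial>scaled_chi2 (KB - 1) r \<partial>normal_law \<mu> (r / real KB) \<partial>scaled_chi2 (KA - 1) s \<partial>normal_law \<mu> (s / real KA))"
    unfolding unit_law_def using nn_integral_prod4[OF pA pN pB Gm] by (simp add: T_BF_simp lam_hat_simp)
  also have "\<dots> = ?R"
  proof -
    have e1: "\<And>mA sA mB. (\<integral>\<^sup>+sB. f ((mA - mB) / sqrt (sA / real KA + sB / real KB)) (sA / sB) \<partial>scaled_chi2 (KB - 1) r)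
       = (\<integral>\<^sup>+V. ennreal (chi2_density (KB - 1) V) * f ((mA - mB) / sqrt (sA / real KA + r / real (KB - 1) * V / real KB)) (sA / (r / real (KB - 1) * V)) \<partial>lborel)"
      by (rule nn_integral_scaled_chi2) measurable
    have e2: "\<And>mA sA. (\<integral>\<^sup>+mB. (\<integral>\<^sup>+V. ennreal (chi2_density (KB - 1) V) * f ((mA - mB) / sqrt (sA / real KA + r / real (KB - 1) * V / real KB)) (sA / (r / real (KB - 1) * V)) \<partial>lborel) \<partial>normal_law \<mu> (r / real KB))
      = (\<integral>\<^sup>+mB. ennreal (normal_density \<mu> (sqrt (r / real KB)) mB) * (\<integral>\<^sup>+V. ennreal (chi2_density (KB - 1) V) * f ((mA - mB) / sqrt (sA / real KA + r / real (KB - 1) * V / real KB)) (sA / (r / real (KB - 1) * V)) \<partial>lborel) \<partial>lborel)"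
      by (rule nn_integral_normal_law) measurable
    have e3: "\<And>mA. (\<integral>\<^sup>+sA. (\<integral>\<^sup>+mB. ennreal (normal_density \<mu> (sqrt (r / real KB)) mB) * (\<integral>\<^sup>+V. ennreal (chi2_density (KB - 1) V) * f ((mA - mB) / sqrt (sA / real KA + r / real (KB - 1) * V / real KB)) (sA / (r / real (KB - 1) * V)) \<partial>lborel) \<partial>lborel) \<partial>scaled_chi2 (KA - 1) s)
      = (\<integral>\<^sup>+U. ennreal (chi2_density (KA - 1) U) * (\<integral>\<^sup>+mB. ennreal (normal_density \<mu> (sqrt (r / real KB)) mB) * (\<integral>\<^sup>+V. ennreal (chi2_density (KB - 1) V) * f ((mA - mB) / sqrt (s / real (KA - 1) * U / real KA + r / real (KB - 1) * V / real KB)) (s / real (KA - 1) * U / (r / real (KB - 1) * V)) \<partial>lborel) \<partial>lborel) \<partial>lborel)"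
      by (rule nn_integral_scaled_chi2) measurable
    have e4: "(\<integral>\<^sup>+mA. (\<integral>\<^sup>+U. ennreal (chi2_density (KA - 1) U) * (\<integral>\<^sup>+mB. ennreal (normal_density \<mu> (sqrt (r / real KB)) mB) * (\<integral>\<^sup>+V. ennreal (chi2_density (KB - 1) V) * f ((mA - mB) / sqrt (s / real (KA - 1) * U / real KA + r / real (KB - 1) * V / real KB)) (s / real (KA - 1) * U / (r / real (KB - 1) * V)) \<partial>lborel) \<partial>lborel) \<partial>lborel) \<partial>normal_law \<mu> (s / real KA))
      = ?R"
      by (rule nn_integral_normal_law) measurable
    show ?thesis unfolding e1 e2 e3 e4 ..
  qed
  finally show ?thesis .
qed

lemma F4_comp:
  fixes g :: "real \<Rightarrow> real \<Rightarrow> real \<Rightarrow> real \<Rightarrow> ennreal"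
  assumes gm: "(\<lambda>(x1, x2, x3, x4). g x1 x2 x3 x4) \<in> borel_measurable borel"
    and [measurable]: "f1 \<in> borel_measurable M" "f2 \<in> borel_measurable M" "f3 \<in> borel_measurable M" "f4 \<in> borel_measurable M"
  shows "(\<lambda>x. g (f1 x) (f2 x) (f3 x) (f4 x)) \<in> borel_measurable M"
proof -
  have "(\<lambda>x. (f1 x, f2 x, f3 x, f4 x)) \<in> measurable M (borel \<Otimes>\<^sub>M (borel \<Otimes>\<^sub>M (borel \<Otimes>\<^sub>M borel)))" by measurable
  then have "(\<lambda>x. (f1 x, f2 x, f3 x, f4 x)) \<in> measurable M borel" by (simp add: borel_prod)
  from measurable_compose[OF this gm] show ?thesis by simp
qed

lemma reorder4:
  fixes a1 a2 a3 a4 :: "real \<Rightarrow> real" and g :: "real \<Rightarrow> real \<Rightarrow> real \<Rightarrow> real \<Rightarrow> ennreal"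
  assumes [measurable]: "a1 \<in> borel_measurable borel" "a2 \<in> borel_measurable borel" "a3 \<in> borel_measurable borel" "a4 \<in> borel_measurable borel"
    and gm: "(\<lambda>(x1, x2, x3, x4). g x1 x2 x3 x4) \<in> borel_measurable borel"
  shows "(\<integral>\<^sup>+x1. ennreal (a1 x1) * (\<integral>\<^sup>+x2. ennreal (a2 x2) * (\<integral>\<^sup>+x3. ennreal (a3 x3) * (\<integral>\<^sup>+x4. ennreal (a4 x4) * g x1 x2 x3 x4 \<partial>lborel) \<partial>lborel) \<partial>lborel) \<partial>lborel)
    = (\<integral>\<^sup>+x2. ennreal (a2 x2) * (\<integral>\<^sup>+x4. ennreal (a4 x4) * (\<integral>\<^sup>+x1. ennreal (a1 x1) * (\<integral>\<^sup>+x3. ennreal (a3 x3) * g x1 x2 x3 x4 \<partial>lborel) \<partial>lborel) \<partial>lborel) \<partial>lborel)"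
proof -
  note F4_comp[OF gm, measurable]
  have "(\<integral>\<^sup>+x1. ennreal (a1 x1) * (\<integral>\<^sup>+x2. ennreal (a2 x2) * (\<integral>\<^sup>+x3. ennreal (a3 x3) * (\<integral>\<^sup>+x4. ennreal (a4 x4) * g x1 x2 x3 x4 \<partial>lborel) \<partial>lborel) \<partial>lborel) \<partial>lborel)
     = (\<integral>\<^sup>+x1. ennreal (a1 x1) * (\<integral>\<^sup>+x2. ennreal (a2 x2) * (\<integral>\<^sup>+x4. ennreal (a4 x4) * (\<integral>\<^sup>+x3. ennreal (a3 x3) * g x1 x2 x3 x4 \<partial>lborel) \<partial>lborel) \<partial>lborel) \<partial>lborel)"
  proof (rule nn_integral_cong, rule arg_cong[where f="(*) _"], rule nn_integral_cong, rule arg_cong[where f="(*) _"])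
    fix x1 x2 :: real
    show "(\<integral>\<^sup>+x3. ennreal (a3 x3) * (\<integral>\<^sup>+x4. ennreal (a4 x4) * g x1 x2 x3 x4 \<partial>lborel) \<partial>lborel)
      = (\<integral>\<^sup>+x4. ennreal (a4 x4) * (\<integral>\<^sup>+x3. ennreal (a3 x3) * g x1 x2 x3 x4 \<partial>lborel) \<partial>lborel)"
      by (rule swap_dens) (auto intro!: case_prod_meas)
  qed
  also have "\<dots> = (\<integral>\<^sup>+x2. ennreal (a2 x2) * (\<integral>\<^sup>+x1. ennreal (a1 x1) * (\<integral>\<^sup>+x4. ennreal (a4 x4) * (\<integral>\<^sup>+x3. ennreal (a3 x3) * g x1 x2 x3 x4 \<partial>lborel) \<partial>lborel) \<partial>lborel) \<partial>lborel)"
    by (rule swap_dens) (auto intro!: case_prod_meas)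
  also have "\<dots> = (\<integral>\<^sup>+x2. ennreal (a2 x2) * (\<integral>\<^sup>+x4. ennreal (a4 x4) * (\<integral>\<^sup>+x1. ennreal (a1 x1) * (\<integral>\<^sup>+x3. ennreal (a3 x3) * g x1 x2 x3 x4 \<partial>lborel) \<partial>lborel) \<partial>lborel) \<partial>lborel)"
  proof (rule nn_integral_cong, rule arg_cong[where f="(*) _"])
    fix x2 :: real
    show "(\<integral>\<^sup>+x1. ennreal (a1 x1) * (\<integral>\<^sup>+x4. ennreal (a4 x4) * (\<integral>\<^sup>+x3. ennreal (a3 x3) * g x1 x2 x3 x4 \<partial>lborel) \<partial>lborel) \<partial>lborel)
      = (\<integral>\<^sup>+x4. ennreal (a4 x4) * (\<integral>\<^sup>+x1. ennreal (a1 x1) * (\<integral>\<^sup>+x3. ennreal (a3 x3) * g x1 x2 x3 x4 \<partial>lborel) \<partial>lborel) \<partial>lborel)"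
      by (rule swap_dens) (auto intro!: case_prod_meas)
  qed
  finally show ?thesis .
qed

lemma normal_part:
  fixes f :: "real \<Rightarrow> real \<Rightarrow> ennreal" and Q L s r KA KB :: real
  assumes s: "s > 0" and r: "r > 0" and KA: "KA > 0" and KB: "KB > 0"
    and fm: "case_prod f \<in> borel_measurable borel"
  shows "(\<integral>\<^sup>+mA. ennreal (normal_density \<mu> (sqrt (s / KA)) mA) *
            (\<integral>\<^sup>+mB. ennreal (normal_density \<mu> (sqrt (r / KB)) mB) * f ((mA - mB) / sqrt Q) L \<partial>lborel) \<partial>lborel)
       = (\<integral>\<^sup>+z. ennreal (std_normal_density z) * f (sqrt (s / KA + r / KB) * z / sqrt Q) L \<partial>lborel)"
proof -
  note F_comp[OF fm, measurable]
  have "(\<integral>\<^sup>+mA. ennreal (normal_density \<mu> (sqrt (s / KA)) mA) *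
            (\<integral>\<^sup>+mB. ennreal (normal_density \<mu> (sqrt (r / KB)) mB) * f ((mA - mB) / sqrt Q) L \<partial>lborel) \<partial>lborel)
     = (\<integral>\<^sup>+d. ennreal (normal_density 0 (sqrt ((sqrt (s / KA))\<^sup>2 + (sqrt (r / KB))\<^sup>2)) d) * f (d / sqrt Q) L \<partial>lborel)"
    using s r KA KB by (intro normal_diff[where g="\<lambda>d. f (d / sqrt Q) L"]) auto
  also have "(sqrt (s / KA))\<^sup>2 + (sqrt (r / KB))\<^sup>2 = s / KA + r / KB" using s r KA KB by simp
  also have "(\<integral>\<^sup>+d. ennreal (normal_density 0 (sqrt (s / KA + r / KB)) d) * f (d / sqrt Q) L \<partial>lborel)
     = (\<integral>\<^sup>+z. ennreal (std_normal_density z) * f (sqrt (s / KA + r / KB) * z / sqrt Q) L \<partial>lborel)"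
    using s r KA KB by (intro normal_scale[where g="\<lambda>d. f (d / sqrt Q) L"]) (auto intro!: add_pos_pos)
  finally show ?thesis .
qed

lemma phi_identity:
  fixes s r y W :: real and KA KB :: nat
  assumes KA: "KA \<ge> 2" and KB: "KB \<ge> 2" and s: "s > 0" and r: "r > 0" and y: "y > 0" and W: "W > 0"
  shows "sqrt (s / real KA + r / real KB) * z /
           sqrt (s / real (KA - 1) * (W / (1 + y) * y) / real KA + r / real (KB - 1) * (W / (1 + y)) / real KB)
       = phi_VR KA KB (s / r) (s / r * real (KB - 1) / real (KA - 1) * y) * (sqrt (real (KA - 1 + (KB - 1)) / W) * z)"
proof -
  define a where "a = real (KA - 1)"
  define b where "b = real (KB - 1)"
  have a: "a > 0" and b: "b > 0" using KA KB by (auto simp: a_def b_def)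
  define l where "l = s / r * b / a * y"
  define c where "c = l / (l + real KA / real KB)"
  define g where "g = (s / r) / (s / r + real KA / real KB)"
  define Z where "Z = a * c / g + b * (1 - c) / (1 - g)"
  define Q where "Q = s / a * (W / (1 + y) * y) / real KA + r / b * (W / (1 + y)) / real KB"
  have ri: "(s / real KA + r / real KB) / Q = Z / W"
    unfolding Q_def Z_def c_def g_def l_def
    using ratio_identity[OF s r a b _ _ y W, of "real KA" "real KB"] KA KB by simp
  have Qp: "Q > 0" using s r a b y W KA KB by (simp add: Q_def add_pos_pos)
  have Np: "s / real KA + r / real KB > 0" using s r KA KB by (simp add: add_pos_pos)
  have Zp: "Z / W > 0" using ri Qp Np by (metis divide_pos_pos)
  have phi: "phi_VR KA KB (s / r) (s / r * real (KB - 1) / real (KA - 1) * y) = sqrt (Z / (a + b))"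
    unfolding phi_VR_def Let_def Z_def c_def g_def l_def a_def b_def by simp
  have "sqrt (s / real KA + r / real KB) / sqrt Q = sqrt (Z / W)"
    by (simp add: real_sqrt_divide[symmetric] ri)
  also have "\<dots> = sqrt (Z / (a + b)) * sqrt ((a + b) / W)"
    using a b by (simp add: real_sqrt_mult[symmetric])
  finally have e: "sqrt (s / real KA + r / real KB) / sqrt Q = sqrt (Z / (a + b)) * sqrt ((a + b) / W)" .
  have ab: "real (KA - 1 + (KB - 1)) = a + b" by (simp add: a_def b_def)
  show ?thesis
    unfolding phi ab Q_def[unfolded a_def b_def, symmetric]
    using e by (metis (no_types, lifting) mult.commute mult.left_commute times_divide_eq_left)
qed



lemma meas4:
  fixes g :: "real \<Rightarrow> real \<Rightarrow> real \<Rightarrow> real \<Rightarrow> ennreal"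
  shows "(\<lambda>p. g (fst p) (fst (snd p)) (fst (snd (snd p))) (snd (snd (snd p)))) \<in> borel_measurable (borel \<Otimes>\<^sub>M (borel \<Otimes>\<^sub>M (borel \<Otimes>\<^sub>M borel)))
    \<Longrightarrow> (\<lambda>(x1, x2, x3, x4). g x1 x2 x3 x4) \<in> borel_measurable borel"
  by (simp add: borel_prod case_prod_beta')

lemma student_t_density_meas[measurable]: "student_t_density k \<in> borel_measurable borel"
  unfolding student_t_density_def[abs_def] by measurable

lemma phi_VR_meas[measurable]:
  assumes [measurable]: "g \<in> borel_measurable M" "h \<in> borel_measurable M"
  shows "(\<lambda>x. phi_VR KA KB (g x) (h x)) \<in> borel_measurable M"
  unfolding phi_VR_def Let_def by measurable

lemma unit_law_integral:
  fixes f :: "real \<Rightarrow> real \<Rightarrow> ennreal" and KA KB :: nat and \<mu> s r :: real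
  assumes KA: "KA \<ge> 2" and KB: "KB \<ge> 2" and s: "s > 0" and r: "r > 0"
    and fm: "case_prod f \<in> borel_measurable borel"
  shows "(\<integral>\<^sup>+w. f (T_BF KA KB w) (lam_hat w) \<partial>unit_law KA KB \<mu> s \<mu> r)
    = (\<integral>\<^sup>+l. ennreal (p_ratio KA KB l (s / r)) *
         (\<integral>\<^sup>+x. ennreal (student_t_density (KA - 1 + (KB - 1)) x) * f (phi_VR KA KB (s / r) l * x) l \<partial>lborel) \<partial>lborel)"
proof -
  note F_comp[OF fm, measurable]
  have KA0: "real KA > 0" and KB0: "real KB > 0" using KA KB by auto
  have a0: "KA - 1 > 0" and b0: "KB - 1 > 0" using KA KB by auto
  have "(\<integral>\<^sup>+w. f (T_BF KA KB w) (lam_hat w) \<partial>unit_law KA KB \<mu> s \<mu> r)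
    = (\<integral>\<^sup>+mA. ennreal (normal_density \<mu> (sqrt (s / real KA)) mA) *
        (\<integral>\<^sup>+U. ennreal (chi2_density (KA - 1) U) *
          (\<integral>\<^sup>+mB. ennreal (normal_density \<mu> (sqrt (r / real KB)) mB) *
            (\<integral>\<^sup>+V. ennreal (chi2_density (KB - 1) V) *
               f ((mA - mB) / sqrt (s / real (KA - 1) * U / real KA + r / real (KB - 1) * V / real KB))
                 (s / real (KA - 1) * U / (r / real (KB - 1) * V)) \<partial>lborel) \<partial>lborel) \<partial>lborel) \<partial>lborel)"
    by (rule unit_law_step1[OF KA KB s r fm])
  also have "\<dots> = (\<integral>\<^sup>+U. ennreal (chi2_density (KA - 1) U) *
        (\<integral>\<^sup>+V. ennreal (chi2_density (KB - 1) V) *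
          (\<integral>\<^sup>+mA. ennreal (normal_density \<mu> (sqrt (s / real KA)) mA) *
            (\<integral>\<^sup>+mB. ennreal (normal_density \<mu> (sqrt (r / real KB)) mB) *
               f ((mA - mB) / sqrt (s / real (KA - 1) * U / real KA + r / real (KB - 1) * V / real KB))
                 (s / real (KA - 1) * U / (r / real (KB - 1) * V)) \<partial>lborel) \<partial>lborel) \<partial>lborel) \<partial>lborel)"
  proof -
    have gm: "(\<lambda>(x1, x2, x3, x4). f ((x1 - x3) / sqrt (s / real (KA - 1) * x2 / real KA + r / real (KB - 1) * x4 / real KB)) (s / real (KA - 1) * x2 / (r / real (KB - 1) * x4))) \<in> borel_measurable borel"
      by (rule meas4[where g="\<lambda>x1 x2 x3 x4. f ((x1 - x3) / sqrt (s / real (KA - 1) * x2 / real KA + r / real (KB - 1) * x4 / real KB)) (s / real (KA - 1) * x2 / (r / real (KB - 1) * x4))"]) measurable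
    show ?thesis by (rule reorder4[OF _ _ _ _ gm]) simp_all
  qed
  also have "\<dots> = (\<integral>\<^sup>+U. ennreal (chi2_density (KA - 1) U) *
        (\<integral>\<^sup>+V. ennreal (chi2_density (KB - 1) V) *
          (\<integral>\<^sup>+z. ennreal (std_normal_density z) * f (sqrt (s / real KA + r / real KB) * z / sqrt (s / real (KA - 1) * U / real KA + r / real (KB - 1) * V / real KB))
                 (s / real (KA - 1) * U / (r / real (KB - 1) * V)) \<partial>lborel) \<partial>lborel) \<partial>lborel)"
    by (intro nn_integral_cong arg_cong[where f="(*) _"] normal_part s r KA0 KB0 fm)
  also have "\<dots> = (\<integral>\<^sup>+y. ennreal (bp (KA - 1) (KB - 1) y) *
        (\<integral>\<^sup>+W. ennreal (chi2_density (KA - 1 + (KB - 1)) W) *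
          (\<integral>\<^sup>+z. ennreal (std_normal_density z) * f (sqrt (s / real KA + r / real KB) * z / sqrt (s / real (KA - 1) * (W / (1 + y) * y) / real KA + r / real (KB - 1) * (W / (1 + y)) / real KB))
                 (s / real (KA - 1) * (W / (1 + y) * y) / (r / real (KB - 1) * (W / (1 + y)))) \<partial>lborel) \<partial>lborel) \<partial>lborel)"
    by (rule chi_ratio[OF a0 b0, where F="\<lambda>U V. (\<integral>\<^sup>+z. ennreal (std_normal_density z) * f (sqrt (s / real KA + r / real KB) * z / sqrt (s / real (KA - 1) * U / real KA + r / real (KB - 1) * V / real KB))
                 (s / real (KA - 1) * U / (r / real (KB - 1) * V)) \<partial>lborel)"])
       (rule case_prod_meas[where h="\<lambda>U V. (\<integral>\<^sup>+z. ennreal (std_normal_density z) * f (sqrt (s / real KA + r / real KB) * z / sqrt (s / real (KA - 1) * U / real KA + r / real (KB - 1) * V / real KB))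
                 (s / real (KA - 1) * U / (r / real (KB - 1) * V)) \<partial>lborel)"], measurable)
  also have "\<dots> = (\<integral>\<^sup>+y. ennreal (bp (KA - 1) (KB - 1) y) *
        (\<integral>\<^sup>+W. ennreal (chi2_density (KA - 1 + (KB - 1)) W) *
          (\<integral>\<^sup>+z. ennreal (std_normal_density z) *
             f (phi_VR KA KB (s / r) (s / r * real (KB - 1) / real (KA - 1) * y) * (sqrt (real (KA - 1 + (KB - 1)) / W) * z))
               (s / r * real (KB - 1) / real (KA - 1) * y) \<partial>lborel) \<partial>lborel) \<partial>lborel)"
  proof (rule nn_integral_cong)
    fix y :: real
    show "ennreal (bp (KA - 1) (KB - 1) y) *
        (\<integral>\<^sup>+W. ennreal (chi2_density (KA - 1 + (KB - 1)) W) *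
          (\<integral>\<^sup>+z. ennreal (std_normal_density z) * f (sqrt (s / real KA + r / real KB) * z / sqrt (s / real (KA - 1) * (W / (1 + y) * y) / real KA + r / real (KB - 1) * (W / (1 + y)) / real KB))
                 (s / real (KA - 1) * (W / (1 + y) * y) / (r / real (KB - 1) * (W / (1 + y)))) \<partial>lborel) \<partial>lborel)
      = ennreal (bp (KA - 1) (KB - 1) y) *
        (\<integral>\<^sup>+W. ennreal (chi2_density (KA - 1 + (KB - 1)) W) *
          (\<integral>\<^sup>+z. ennreal (std_normal_density z) *
             f (phi_VR KA KB (s / r) (s / r * real (KB - 1) / real (KA - 1) * y) * (sqrt (real (KA - 1 + (KB - 1)) / W) * z))
               (s / r * real (KB - 1) / real (KA - 1) * y) \<partial>lborel) \<partial>lborel)"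
    proof (cases "y > 0")
      case False
      then have "bp (KA - 1) (KB - 1) y = 0" by (simp add: bp_def)
      then show ?thesis by simp
    next
      case y: True
      show ?thesis
      proof (rule arg_cong[where f="(*) _"], rule nn_integral_cong)
        fix W :: real
        show "ennreal (chi2_density (KA - 1 + (KB - 1)) W) *
          (\<integral>\<^sup>+z. ennreal (std_normal_density z) * f (sqrt (s / real KA + r / real KB) * z / sqrt (s / real (KA - 1) * (W / (1 + y) * y) / real KA + r / real (KB - 1) * (W / (1 + y)) / real KB))
                 (s / real (KA - 1) * (W / (1 + y) * y) / (r / real (KB - 1) * (W / (1 + y)))) \<partial>lborel)
          = ennreal (chi2_density (KA - 1 + (KB - 1)) W) *
          (\<integral>\<^sup>+z. ennreal (std_normal_density z) *
             f (phi_VR KA KB (s / r) (s / r * real (KB - 1) / real (KA - 1) * y) * (sqrt (real (KA - 1 + (KB - 1)) / W) * z))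
               (s / r * real (KB - 1) / real (KA - 1) * y) \<partial>lborel)"
        proof (cases "W > 0")
          case False
          then have "chi2_density (KA - 1 + (KB - 1)) W = 0" by (simp add: chi2_density_def)
          then show ?thesis by simp
        next
          case W: True
          have leq': "\<And>Y. Y > 0 \<Longrightarrow> s / real (KA - 1) * (W / Y * y) / (r / real (KB - 1) * (W / Y)) = s / r * real (KB - 1) / real (KA - 1) * y"
            using W r KA KB by (simp add: field_simps)
          have leq: "s / real (KA - 1) * (W / (1 + y) * y) / (r / real (KB - 1) * (W / (1 + y))) = s / r * real (KB - 1) / real (KA - 1) * y"
            using y by (intro leq') simp
          show ?thesis unfolding leq phi_identity[OF KA KB s r y W] ..
        qed
      qed
    qed
  qed
  also have "\<dots> = (\<integral>\<^sup>+y. ennreal (bp (KA - 1) (KB - 1) y) *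
        (\<integral>\<^sup>+x. ennreal (student_t_density (KA - 1 + (KB - 1)) x) *
             f (phi_VR KA KB (s / r) (s / r * real (KB - 1) / real (KA - 1) * y) * x)
               (s / r * real (KB - 1) / real (KA - 1) * y) \<partial>lborel) \<partial>lborel)"
  proof (rule nn_integral_cong, rule arg_cong[where f="(*) _"])
    fix y :: real
    have k: "KA - 1 + (KB - 1) > 0" using KA by simp
    show "(\<integral>\<^sup>+W. ennreal (chi2_density (KA - 1 + (KB - 1)) W) *
          (\<integral>\<^sup>+z. ennreal (std_normal_density z) *
             f (phi_VR KA KB (s / r) (s / r * real (KB - 1) / real (KA - 1) * y) * (sqrt (real (KA - 1 + (KB - 1)) / W) * z))
               (s / r * real (KB - 1) / real (KA - 1) * y) \<partial>lborel) \<partial>lborel)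
       = (\<integral>\<^sup>+x. ennreal (student_t_density (KA - 1 + (KB - 1)) x) *
             f (phi_VR KA KB (s / r) (s / r * real (KB - 1) / real (KA - 1) * y) * x)
               (s / r * real (KB - 1) / real (KA - 1) * y) \<partial>lborel)"
      by (rule t_law[OF k, where h="\<lambda>x. f (phi_VR KA KB (s / r) (s / r * real (KB - 1) / real (KA - 1) * y) * x)
               (s / r * real (KB - 1) / real (KA - 1) * y)"]) measurable
  qed
  also have "\<dots> = (\<integral>\<^sup>+l. ennreal (p_ratio KA KB l (s / r)) *
         (\<integral>\<^sup>+x. ennreal (student_t_density (KA - 1 + (KB - 1)) x) * f (phi_VR KA KB (s / r) l * x) l \<partial>lborel) \<partial>lborel)"
  proof -
    have lam: "s / r > 0" using s r by simp
    show ?thesis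
      by (rule f_scale[OF KA KB lam, where H="\<lambda>l. (\<integral>\<^sup>+x. ennreal (student_t_density (KA - 1 + (KB - 1)) x) * f (phi_VR KA KB (s / r) l * x) l \<partial>lborel)"])
         measurable
  qed
  finally show ?thesis .
qed



lemma t_dens_nonneg: "student_t_density k x \<ge> 0"
proof -
  have "Gamma ((real k + 1) / 2) > 0" by (intro Gamma_real_pos) simp
  moreover have "Gamma (real k / 2) \<ge> 0" by (cases "k = 0") (auto intro: less_imp_le Gamma_real_pos)
  ultimately show ?thesis unfolding student_t_density_def by (auto intro!: mult_nonneg_nonneg divide_nonneg_nonneg)
qed

lemma t_integral: assumes k: "k > 0" shows "(\<integral>\<^sup>+x. ennreal (student_t_density k x) \<partial>lborel) = 1"
proof -
  have std: "(\<integral>\<^sup>+z. ennreal (std_normal_density z) \<partial>lborel) = 1"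
    by (subst nn_integral_eq_integral) (auto simp: normal_density_nonneg)
  have "(\<integral>\<^sup>+x. ennreal (student_t_density k x) \<partial>lborel) = (\<integral>\<^sup>+x. ennreal (student_t_density k x) * 1 \<partial>lborel)" by simp
  also have "\<dots> = (\<integral>\<^sup>+W. ennreal (chi2_density k W) * (\<integral>\<^sup>+z. ennreal (std_normal_density z) * 1 \<partial>lborel) \<partial>lborel)"
    by (rule t_law[OF k, where h="\<lambda>_. 1", symmetric]) simp
  also have "\<dots> = 1" using std chi2_integral[OF k] by simp
  finally show ?thesis .
qed

lemma t_integrable: "k > 0 \<Longrightarrow> integrable lborel (student_t_density k)"
  by (rule integrableI_bounded) (auto simp: t_dens_nonneg t_integral)

lemma cdf_enn: assumes k: "k > 0"
  shows "ennreal (student_t_cdf k t) = (\<integral>\<^sup>+x. ennreal (student_t_density k x * indicator {..t} x) \<partial>lborel)"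
proof -
  have "integrable lborel (\<lambda>x. indicator {..t} x *\<^sub>R student_t_density k x)"
    by (rule integrable_mult_indicator) (simp_all add: t_integrable k)
  then have i: "integrable lborel (\<lambda>x. student_t_density k x * indicator {..t} x)"
    by (simp add: mult.commute)
  have "student_t_cdf k t = (\<integral>x. student_t_density k x * indicator {..t} x \<partial>lborel)"
    unfolding student_t_cdf_def set_lebesgue_integral_def by (simp add: mult.commute)
  then show ?thesis
    by (simp add: nn_integral_eq_integral[OF i] t_dens_nonneg)
qed

lemma cdf_nonneg: "k > 0 \<Longrightarrow> student_t_cdf k t \<ge> 0"
  unfolding student_t_cdf_def set_lebesgue_integral_def
  by (intro integral_nonneg_AE) (auto simp: t_dens_nonneg)

lemma cdf_mono: assumes k: "k > 0" and st: "s \<le> t" shows "student_t_cdf k s \<le> student_t_cdf k t"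
proof -
  have "ennreal (student_t_cdf k s) \<le> ennreal (student_t_cdf k t)"
    unfolding cdf_enn[OF k]
    using st by (intro nn_integral_mono) (auto simp: indicator_def t_dens_nonneg)
  then show ?thesis using cdf_nonneg[OF k] by simp
qed

definition t_max :: "nat \<Rightarrow> real" where
  "t_max k = Gamma ((real k + 1) / 2) / (sqrt (real k * pi) * Gamma (real k / 2))"

lemma t_dens_le: assumes k: "k > 0" shows "student_t_density k x \<le> t_max k"
proof -
  have q: "1 + x\<^sup>2 / real k \<ge> 1" using k by simp
  have g1: "(1 + x\<^sup>2 / real k) powr ((real k + 1) / 2) \<ge> 1"
    using q by (intro ge_one_powr_ge_zero) auto
  have "- (real k + 1) / 2 = - ((real k + 1) / 2)" by (simp add: field_simps)
  then have "(1 + x\<^sup>2 / real k) powr (- (real k + 1) / 2) = 1 / (1 + x\<^sup>2 / real k) powr ((real k + 1) / 2)"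
    using q by (simp only: powr_minus_divide)
  then have "(1 + x\<^sup>2 / real k) powr (- (real k + 1) / 2) \<le> 1" using g1 by (simp add: divide_le_eq_1)
  moreover have "t_max k \<ge> 0" using k unfolding t_max_def
    by (auto intro!: divide_nonneg_nonneg mult_nonneg_nonneg less_imp_le Gamma_real_pos)
  ultimately show ?thesis unfolding student_t_density_def t_max_def[symmetric]
    by (simp add: mult_left_le)
qed

lemma cdf_lip: assumes k: "k > 0" and st: "s \<le> t"
  shows "student_t_cdf k t - student_t_cdf k s \<le> t_max k * (t - s)"
proof -
  have "ennreal (student_t_cdf k t) = (\<integral>\<^sup>+x. ennreal (student_t_density k x * indicator {..s} x) + ennreal (student_t_density k x * indicator {s<..t} x) \<partial>lborel)"
    unfolding cdf_enn[OF k]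
    using st by (intro nn_integral_cong) (auto simp: indicator_def)
  also have "\<dots> = ennreal (student_t_cdf k s) + (\<integral>\<^sup>+x. ennreal (student_t_density k x * indicator {s<..t} x) \<partial>lborel)"
    by (subst nn_integral_add) (auto simp: cdf_enn[OF k])
  also have "(\<integral>\<^sup>+x. ennreal (student_t_density k x * indicator {s<..t} x) \<partial>lborel) \<le> (\<integral>\<^sup>+x. ennreal (t_max k) * indicator {s<..t} x \<partial>lborel)"
    using t_dens_le[OF k] by (intro nn_integral_mono) (auto simp: indicator_def ennreal_leI)
  also have "\<dots> = ennreal (t_max k * (t - s))"
    using st t_dens_le[OF k, of 0] t_dens_nonneg[of k 0] by (simp add: nn_integral_cmult_indicator ennreal_mult)
  finally have "ennreal (student_t_cdf k t) \<le> ennreal (student_t_cdf k s + t_max k * (t - s))"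
    using st t_dens_le[OF k, of 0] t_dens_nonneg[of k 0] cdf_nonneg[OF k, of s]
    by (simp add: ennreal_plus[symmetric] del: ennreal_plus)
  then show ?thesis
    using st t_dens_le[OF k, of 0] t_dens_nonneg[of k 0] cdf_nonneg[OF k, of s]
    by (subst (asm) ennreal_le_iff) (auto intro!: add_nonneg_nonneg mult_nonneg_nonneg)
qed

lemma cdf_cont: assumes k: "k > 0" shows "continuous_on UNIV (student_t_cdf k)"
proof (rule lipschitz_on_continuous_on)
  show "(t_max k)-lipschitz_on UNIV (student_t_cdf k)"
  proof (rule lipschitz_onI)
    fix x y :: real
    show "dist (student_t_cdf k x) (student_t_cdf k y) \<le> t_max k * dist x y"
    proof (cases "x \<le> y")
      case True then show ?thesis using cdf_lip[OF k True] cdf_mono[OF k True] by (simp add: dist_real_def)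
    next
      case False then have "y \<le> x" by simp
      then show ?thesis using cdf_lip[OF k \<open>y \<le> x\<close>] cdf_mono[OF k \<open>y \<le> x\<close>] by (simp add: dist_real_def)
    qed
  next
    show "t_max k \<ge> 0" using t_dens_le[OF k, of 0] t_dens_nonneg[of k 0] by simp
  qed
qed

lemma t_sym: "student_t_density k (- x) = student_t_density k x"
  unfolding student_t_density_def by simp

lemma tail: assumes k: "k > 0" and u: "u \<ge> 0"
  shows "(\<integral>\<^sup>+x. ennreal (student_t_density k x * indicator {x. u \<le> \<bar>x\<bar>} x) \<partial>lborel) = ennreal (2 * student_t_cdf k (- u))"
proof -
  have "(\<integral>\<^sup>+x. ennreal (student_t_density k x * indicator {x. u \<le> \<bar>x\<bar>} x) \<partial>lborel)
     = (\<integral>\<^sup>+x. ennreal (student_t_density k x * indicator {..- u} x) + ennreal (student_t_density k x * indicator {u<..} x) \<partial>lborel)"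
  proof (rule nn_integral_cong_AE)
    show "AE x in lborel. ennreal (student_t_density k x * indicator {x. u \<le> \<bar>x\<bar>} x)
       = ennreal (student_t_density k x * indicator {..- u} x) + ennreal (student_t_density k x * indicator {u<..} x)"
      using AE_lborel_singleton[of u] by eventually_elim (use u in \<open>auto simp: indicator_def\<close>)
  qed
  also have "\<dots> = (\<integral>\<^sup>+x. ennreal (student_t_density k x * indicator {..- u} x) \<partial>lborel) + (\<integral>\<^sup>+x. ennreal (student_t_density k x * indicator {u<..} x) \<partial>lborel)"
    by (rule nn_integral_add) auto
  also have "(\<integral>\<^sup>+x. ennreal (student_t_density k x * indicator {u<..} x) \<partial>lborel)
      = (\<integral>\<^sup>+x. ennreal (student_t_density k (0 + (-1) * x) * indicator {u<..} (0 + (-1) * x)) \<partial>lborel)"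
    using nn_integral_real_affine[of "\<lambda>x. ennreal (student_t_density k x * indicator {u<..} x)" "-1" 0] by simp
  also have "\<dots> = (\<integral>\<^sup>+x. ennreal (student_t_density k x * indicator {..- u} x) \<partial>lborel)"
  proof (rule nn_integral_cong_AE)
    show "AE x in lborel. ennreal (student_t_density k (0 + (-1) * x) * indicator {u<..} (0 + (-1) * x)) = ennreal (student_t_density k x * indicator {..- u} x)"
      using AE_lborel_singleton[of "-u"] by eventually_elim (auto simp: indicator_def t_sym)
  qed
  also have "(\<integral>\<^sup>+x. ennreal (student_t_density k x * indicator {..- u} x) \<partial>lborel) = ennreal (student_t_cdf k (- u))"
    by (rule cdf_enn[OF k, symmetric])
  finally show ?thesis using cdf_nonneg[OF k, of "-u"] by (simp add: ennreal_plus[symmetric] del: ennreal_plus)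
qed



lemma pval_bound:
  fixes J :: "nat set" and p \<phi> :: "nat \<Rightarrow> real" and \<alpha> :: real and k :: nat
  assumes k: "k > 0" and J: "finite J" and p: "\<And>j. j \<in> J \<Longrightarrow> p j \<ge> 0"
    and \<phi>: "\<And>j. j \<in> J \<Longrightarrow> \<phi> j > 0" and \<alpha>: "\<alpha> \<ge> 0"
  shows "(\<Sum>j\<in>J. ennreal (p j) * (\<integral>\<^sup>+x. ennreal (student_t_density k x) *
            (if (\<Sum>i\<in>J. 2 * student_t_cdf k (- \<bar>\<phi> j * x\<bar> / \<phi> i) * p i) / (\<Sum>i\<in>J. p i) \<le> \<alpha> then 1 else 0) \<partial>lborel))
         \<le> ennreal (\<alpha> * (\<Sum>i\<in>J. p i))"
proof -
  define S where "S = (\<Sum>i\<in>J. p i)"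
  define Gt where "Gt u = (\<Sum>i\<in>J. 2 * student_t_cdf k (- u / \<phi> i) * p i) / S" for u
  have S0: "S \<ge> 0" unfolding S_def using p by (simp add: sum_nonneg)
  have G: "(\<Sum>i\<in>J. 2 * student_t_cdf k (- \<bar>t\<bar> / \<phi> i) * p i) / (\<Sum>i\<in>J. p i) = Gt \<bar>t\<bar>" for t
    by (simp add: Gt_def S_def)
  have main: "(\<Sum>j\<in>J. ennreal (p j) * (\<integral>\<^sup>+x. ennreal (student_t_density k x) * (if Gt \<bar>\<phi> j * x\<bar> \<le> \<alpha> then 1 else 0) \<partial>lborel)) \<le> ennreal (\<alpha> * S)"
  proof (cases "S = 0")
    case True
    then have "\<forall>j\<in>J. p j = 0" using sum_nonneg_eq_0_iff[OF J] p unfolding S_def by blast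
    then show ?thesis by simp
  next
    case False
    then have Sp: "S > 0" using S0 by simp
    have mono: "Gt v \<le> Gt u" if "u \<le> v" for u v
      unfolding Gt_def using Sp
      by (intro divide_right_mono sum_mono mult_right_mono mult_left_mono cdf_mono[OF k])
         (use that \<phi> p in \<open>auto simp: divide_right_mono less_imp_le\<close>)
    have cont: "continuous_on UNIV Gt"
      unfolding Gt_def
      by (intro continuous_on_divide continuous_on_sum continuous_on_mult continuous_on_const
                continuous_on_compose2[OF cdf_cont[OF k]] continuous_intros) (use Sp \<phi> in force)+
    define A where "A = {u. 0 \<le> u \<and> Gt u \<le> \<alpha>}"
    show ?thesis
    proof (cases "A = {}")
      case True
      have "\<And>j x. \<not> Gt \<bar>\<phi> j * x\<bar> \<le> \<alpha>" using True unfolding A_def by auto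
      then show ?thesis by simp
    next
      case False
      have closedA: "closed A"
        unfolding A_def Collect_conj_eq
        by (intro closed_Int closed_Collect_le cont continuous_on_const continuous_on_id)
      have bdd: "bdd_below A" unfolding A_def by (auto intro: bdd_belowI[of _ 0])
      define c where "c = Inf A"
      have cA: "c \<in> A" unfolding c_def using closed_contains_Inf[OF False bdd closedA] .
      have c0: "c \<ge> 0" and Gc: "Gt c \<le> \<alpha>" using cA by (auto simp: A_def)
      have iff: "Gt u \<le> \<alpha> \<longleftrightarrow> c \<le> u" if u: "u \<ge> 0" for u
      proof
        assume "Gt u \<le> \<alpha>" then have "u \<in> A" using u by (simp add: A_def)
        then show "c \<le> u" unfolding c_def using bdd by (rule cInf_lower)
      next
        assume "c \<le> u" then show "Gt u \<le> \<alpha>" using mono Gc by (meson order_trans)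
      qed
      have int: "(\<integral>\<^sup>+x. ennreal (student_t_density k x) * (if Gt \<bar>\<phi> j * x\<bar> \<le> \<alpha> then 1 else 0) \<partial>lborel)
          = ennreal (2 * student_t_cdf k (- (c / \<phi> j)))" if j: "j \<in> J" for j
      proof -
        have pj: "\<phi> j > 0" using \<phi> j .
        have "(\<lambda>x. ennreal (student_t_density k x) * (if Gt \<bar>\<phi> j * x\<bar> \<le> \<alpha> then 1 else 0))
            = (\<lambda>x. ennreal (student_t_density k x * indicator {x. c / \<phi> j \<le> \<bar>x\<bar>} x))"
        proof
          fix x
          have "Gt \<bar>\<phi> j * x\<bar> \<le> \<alpha> \<longleftrightarrow> c \<le> \<phi> j * \<bar>x\<bar>" using iff[of "\<bar>\<phi> j * x\<bar>"] pj by (simp add: abs_mult)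
          also have "\<dots> \<longleftrightarrow> c / \<phi> j \<le> \<bar>x\<bar>" using pj by (simp add: divide_le_eq mult.commute)
          finally show "ennreal (student_t_density k x) * (if Gt \<bar>\<phi> j * x\<bar> \<le> \<alpha> then 1 else 0)
              = ennreal (student_t_density k x * indicator {x. c / \<phi> j \<le> \<bar>x\<bar>} x)" by (simp add: indicator_def)
        qed
        then show ?thesis using tail[OF k, of "c / \<phi> j"] c0 pj by simp
      qed
      have "(\<Sum>j\<in>J. ennreal (p j) * (\<integral>\<^sup>+x. ennreal (student_t_density k x) * (if Gt \<bar>\<phi> j * x\<bar> \<le> \<alpha> then 1 else 0) \<partial>lborel))
          = (\<Sum>j\<in>J. ennreal (p j * (2 * student_t_cdf k (- (c / \<phi> j)))))"
        using p by (intro sum.cong refl) (simp add: int ennreal_mult')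
      also have "\<dots> = ennreal (\<Sum>j\<in>J. p j * (2 * student_t_cdf k (- (c / \<phi> j))))"
        using p cdf_nonneg[OF k] by (intro sum_ennreal) (auto intro!: mult_nonneg_nonneg)
      also have "(\<Sum>j\<in>J. p j * (2 * student_t_cdf k (- (c / \<phi> j)))) = S * Gt c"
        unfolding Gt_def using Sp by (simp add: sum_divide_distrib[symmetric] mult_ac)
      also have "\<dots> \<le> \<alpha> * S" using Gc Sp by (simp add: mult.commute mult_left_mono)
      finally show ?thesis by (simp add: ennreal_leI)
    qed
  qed
  show ?thesis using main unfolding G S_def .
qed



lemma student_t_cdf_meas[measurable]:
  assumes [measurable]: "g \<in> borel_measurable M"
  shows "(\<lambda>x. student_t_cdf k (g x)) \<in> borel_measurable M"
proof -
  have "(\<lambda>p. indicator {..g (fst p)} (snd p) *\<^sub>R student_t_density k (snd p)) \<in> borel_measurable (M \<Otimes>\<^sub>M borel)"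
    unfolding indicator_def atMost_iff by measurable
  then have m: "(\<lambda>p. indicator {..g (fst p)} (snd p) *\<^sub>R student_t_density k (snd p)) \<in> borel_measurable (M \<Otimes>\<^sub>M lborel)"
    by (subst measurable_cong_sets[OF sets_pair_measure_cong[OF refl sets_lborel] refl])
  have m': "case_prod (\<lambda>x y. indicator {..g x} y *\<^sub>R student_t_density k y) \<in> borel_measurable (M \<Otimes>\<^sub>M lborel)"
    using m by (simp add: case_prod_beta')
  have "(\<lambda>x. \<integral>y. indicator {..g x} y *\<^sub>R student_t_density k y \<partial>lborel) \<in> borel_measurable M"
    by (rule lborel.borel_measurable_lebesgue_integral[OF m'])
  then show ?thesis unfolding student_t_cdf_def set_lebesgue_integral_def by simp
qed

lemma P_VR_G_meas[measurable]:
  assumes [measurable]: "g \<in> borel_measurable M" "h \<in> borel_measurable M"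
  shows "(\<lambda>x. P_VR_G KA KB n lam (g x) (h x)) \<in> borel_measurable M"
  unfolding P_VR_G_def P_VR_def p_ratio_def Let_def by measurable

lemma p_ratio_nonneg: assumes KA: "KA \<ge> 2" and KB: "KB \<ge> 2" and lam: "lam > 0"
  shows "p_ratio KA KB l lam \<ge> 0"
proof -
  have a: "real (KA - 1) > 0" and b: "real (KB - 1) > 0" using KA KB by auto
  have g1: "Gamma (real (KA - 1) / 2) > 0" by (rule Gamma_real_pos) (use a in simp)
  have g2: "Gamma (real (KB - 1) / 2) > 0" by (rule Gamma_real_pos) (use b in simp)
  have g3: "Gamma (real (KA - 1) / 2 + real (KB - 1) / 2) > 0" by (rule Gamma_real_pos) (use a b in \<open>simp only: add_pos_pos half_gt_zero\<close>)
  have "Beta (real (KA - 1) / 2) (real (KB - 1) / 2) > 0"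
    unfolding Beta_def using g1 g2 g3 by simp
  then show ?thesis using lam unfolding p_ratio_def Let_def
    by (auto intro!: mult_nonneg_nonneg divide_nonneg_nonneg)
qed

lemma phi_pos: assumes KA: "KA \<ge> 2" and KB: "KB \<ge> 2" and lam: "lam > 0" and l: "l > 0"
  shows "phi_VR KA KB lam l > 0"
proof -
  define q where "q = real KA / real KB"
  have q: "q > 0" using KA KB by (simp add: q_def)
  define c where "c = l / (l + q)"
  define g where "g = lam / (lam + q)"
  have c: "0 < c" "c < 1" using l q by (simp_all add: c_def)
  have g: "0 < g" "g < 1" using lam q by (simp_all add: g_def)
  have a: "real (KA - 1) > 0" and b: "real (KB - 1) > 0" using KA KB by auto
  have "real (KA - 1) * c / g + real (KB - 1) * (1 - c) / (1 - g) > 0"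
    using a b c g by (intro add_pos_pos divide_pos_pos mult_pos_pos) auto
  then show ?thesis unfolding phi_VR_def Let_def q_def[symmetric] c_def[symmetric] g_def[symmetric]
    using a b by simp
qed

lemma prob_space_unit_law:
  assumes KA: "KA \<ge> 2" and KB: "KB \<ge> 2" and s: "s > 0" and r: "r > 0"
  shows "prob_space (unit_law KA KB mA s mB r)"
  unfolding unit_law_def using KA KB s r
  by (intro prob_space_pair prob_space_normal_law prob_space_scaled_chi2) auto

lemma sets_unit_law: "sets (unit_law KA KB mA s mB r) = sets (borel \<Otimes>\<^sub>M (borel \<Otimes>\<^sub>M (borel \<Otimes>\<^sub>M borel)))"
  unfolding unit_law_def by (intro sets_pair_measure_cong) simp_all

lemma p_ratio_integral:
  assumes KA: "KA \<ge> 2" and KB: "KB \<ge> 2" and lam: "lam > 0"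
  shows "(\<integral>\<^sup>+l. ennreal (p_ratio KA KB l lam) \<partial>lborel) = 1"
proof -
  interpret prob_space "unit_law KA KB 0 lam 0 1" using prob_space_unit_law[OF KA KB lam] by simp
  have k: "KA - 1 + (KB - 1) > 0" using KA by simp
  have "1 = (\<integral>\<^sup>+w. (\<lambda>t l. 1::ennreal) (T_BF KA KB w) (lam_hat w) \<partial>unit_law KA KB 0 lam 0 1)"
    using emeasure_space_1 by (simp add: nn_integral_const)
  also have "\<dots> = (\<integral>\<^sup>+l. ennreal (p_ratio KA KB l (lam / 1)) * (\<integral>\<^sup>+x. ennreal (student_t_density (KA - 1 + (KB - 1)) x) * 1 \<partial>lborel) \<partial>lborel)"
    using unit_law_integral[OF KA KB lam zero_less_one, where f="\<lambda>t l. 1" and \<mu>=0] by simp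
  also have "\<dots> = (\<integral>\<^sup>+l. ennreal (p_ratio KA KB l lam) \<partial>lborel)" using t_integral[OF k] by simp
  finally show ?thesis ..
qed



lemma p_ratio_meas[measurable]:
  assumes [measurable]: "g \<in> borel_measurable M" "h \<in> borel_measurable M"
  shows "(\<lambda>x. p_ratio KA KB (g x) (h x)) \<in> borel_measurable M"
  unfolding p_ratio_def Let_def by measurable

theorem propositionS5:
  fixes KA KB n :: nat and muA muB sA sB :: "nat \<Rightarrow> real" and \<alpha> :: real
  assumes "KA \<ge> 2" and "KB \<ge> 2"
    and "\<And>i. i \<in> {1..n} \<Longrightarrow> sA i > 0"
    and "\<And>i. i \<in> {1..n} \<Longrightarrow> sB i > 0"
    and "0 \<le> \<alpha>" and "\<alpha> \<le> 1"
  shows "(1 / real n) * (\<Sum>i\<in>{i\<in>{1..n}. muA i = muB i}.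
            measure (unit_law KA KB (muA i) (sA i) (muB i) (sB i))
              {w. P_VR_G KA KB n (\<lambda>j. sA j / sB j) (T_BF KA KB w) (lam_hat w) \<le> \<alpha>}) \<le> \<alpha>"
proof -
  note KA = assms(1) and KB = assms(2) and sA = assms(3) and sB = assms(4) and \<alpha> = assms(5)
  define lamv where "lamv = (\<lambda>j. sA j / sB j)"
  define H0 where "H0 = {i\<in>{1..n}. muA i = muB i}"
  define f where "f = (\<lambda>t l. if P_VR_G KA KB n lamv t l \<le> \<alpha> then 1 else (0::ennreal))"
  define E where "E = {w. P_VR_G KA KB n lamv (T_BF KA KB w) (lam_hat w) \<le> \<alpha>}"
  define K where "K = (\<lambda>i l. \<integral>\<^sup>+x. ennreal (student_t_density (KA - 1 + (KB - 1)) x) * f (phi_VR KA KB (lamv i) l * x) l \<partial>lborel)"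
  define \<Phi> where "\<Phi> = (\<lambda>i. \<integral>\<^sup>+l. ennreal (p_ratio KA KB l (lamv i)) * K i l \<partial>lborel)"
  have k: "KA - 1 + (KB - 1) > 0" using KA by simp
  have lampos: "lamv i > 0" if "i \<in> {1..n}" for i using sA[OF that] sB[OF that] by (simp add: lamv_def)
  have fm0: "(\<lambda>p. f (fst p) (snd p)) \<in> borel_measurable (borel \<Otimes>\<^sub>M borel)" unfolding f_def by measurable
  then have fm: "case_prod f \<in> borel_measurable borel" by (simp add: borel_prod case_prod_beta')
  note F_comp[OF fm, measurable]
  have Esets: "E \<in> sets (unit_law KA KB m1 s1 m2 s2)" for m1 s1 m2 s2
  proof -
    have "{w \<in> space (borel \<Otimes>\<^sub>M (borel \<Otimes>\<^sub>M (borel \<Otimes>\<^sub>M borel))). P_VR_G KA KB n lamv (T_BF KA KB w) (lam_hat w) \<le> \<alpha>}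
       \<in> sets (borel \<Otimes>\<^sub>M (borel \<Otimes>\<^sub>M (borel \<Otimes>\<^sub>M (borel :: real measure))))"
      unfolding T_BF_def lam_hat_def by measurable
    then show ?thesis by (simp add: sets_unit_law E_def space_pair_measure)
  qed
  have em: "emeasure (unit_law KA KB (muA i) (sA i) (muB i) (sB i)) E = \<Phi> i" if i: "i \<in> H0" for i
  proof -
    have i1: "i \<in> {1..n}" and mu: "muB i = muA i" using i by (auto simp: H0_def)
    have "emeasure (unit_law KA KB (muA i) (sA i) (muB i) (sB i)) E = (\<integral>\<^sup>+w. indicator E w \<partial>unit_law KA KB (muA i) (sA i) (muA i) (sB i))"
      unfolding mu by (rule nn_integral_indicator[symmetric, OF Esets])
    also have "\<dots> = (\<integral>\<^sup>+w. f (T_BF KA KB w) (lam_hat w) \<partial>unit_law KA KB (muA i) (sA i) (muA i) (sB i))"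
      by (rule nn_integral_cong) (simp add: f_def E_def indicator_def)
    also have "\<dots> = \<Phi> i"
      unfolding \<Phi>_def K_def lamv_def by (rule unit_law_integral[OF KA KB sA[OF i1] sB[OF i1] fm])
    finally show ?thesis .
  qed
  have fin: "emeasure (unit_law KA KB (muA i) (sA i) (muB i) (sB i)) E < top" if i: "i \<in> H0" for i
  proof -
    have i1: "i \<in> {1..n}" using i by (auto simp: H0_def)
    interpret prob_space "unit_law KA KB (muA i) (sA i) (muB i) (sB i)"
      by (rule prob_space_unit_law[OF KA KB sA[OF i1] sB[OF i1]])
    show ?thesis using emeasure_finite[of E] by (simp add: less_top[symmetric])
  qed
  have pw: "(\<Sum>i\<in>{1..n}. ennreal (p_ratio KA KB l (lamv i)) * K i l) \<le> ennreal (\<alpha> * (\<Sum>i\<in>{1..n}. p_ratio KA KB l (lamv i)))" for l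
  proof (cases "l > 0")
    case False
    then show ?thesis by (simp add: p_ratio_def)
  next
    case True
    show ?thesis unfolding K_def f_def P_VR_G_def P_VR_def
      by (rule pval_bound[OF k]) (auto intro!: p_ratio_nonneg phi_pos KA KB lampos True \<alpha>)
  qed
  have "(\<Sum>i\<in>H0. \<Phi> i) \<le> (\<Sum>i\<in>{1..n}. \<Phi> i)"
    by (rule sum_mono2) (auto simp: H0_def)
  also have "\<dots> = (\<integral>\<^sup>+l. (\<Sum>i\<in>{1..n}. ennreal (p_ratio KA KB l (lamv i)) * K i l) \<partial>lborel)"
    unfolding \<Phi>_def K_def by (rule nn_integral_sum[symmetric]) measurable
  also have "\<dots> \<le> (\<integral>\<^sup>+l. ennreal (\<alpha> * (\<Sum>i\<in>{1..n}. p_ratio KA KB l (lamv i))) \<partial>lborel)"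
    by (rule nn_integral_mono) (rule pw)
  also have "\<dots> = (\<integral>\<^sup>+l. ennreal \<alpha> * (\<Sum>i\<in>{1..n}. ennreal (p_ratio KA KB l (lamv i))) \<partial>lborel)"
  proof (rule nn_integral_cong)
    fix l :: real
    have nn: "\<And>i. i \<in> {1..n} \<Longrightarrow> p_ratio KA KB l (lamv i) \<ge> 0" using p_ratio_nonneg[OF KA KB lampos] .
    have s: "(\<Sum>i\<in>{1..n}. ennreal (p_ratio KA KB l (lamv i))) = ennreal (\<Sum>i\<in>{1..n}. p_ratio KA KB l (lamv i))"
      using nn by (rule sum_ennreal)
    have "(\<Sum>i\<in>{1..n}. p_ratio KA KB l (lamv i)) \<ge> 0" using nn by (rule sum_nonneg)
    then show "ennreal (\<alpha> * (\<Sum>i\<in>{1..n}. p_ratio KA KB l (lamv i))) = ennreal \<alpha> * (\<Sum>i\<in>{1..n}. ennreal (p_ratio KA KB l (lamv i)))"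
      unfolding s using \<alpha> by (simp add: ennreal_mult)
  qed
  also have "\<dots> = ennreal \<alpha> * (\<Sum>i\<in>{1..n}. (\<integral>\<^sup>+l. ennreal (p_ratio KA KB l (lamv i)) \<partial>lborel))"
    by (subst nn_integral_cmult) (auto simp: nn_integral_sum)
  also have "\<dots> = ennreal (\<alpha> * real n)"
    by (simp add: p_ratio_integral[OF KA KB] lampos ennreal_mult \<alpha> ennreal_of_nat_eq_real_of_nat)
  finally have bound: "(\<Sum>i\<in>H0. \<Phi> i) \<le> ennreal (\<alpha> * real n)" .
  have "(\<Sum>i\<in>H0. measure (unit_law KA KB (muA i) (sA i) (muB i) (sB i)) E)
      = enn2real (\<Sum>i\<in>H0. emeasure (unit_law KA KB (muA i) (sA i) (muB i) (sB i)) E)"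
    by (subst enn2real_sum) (auto simp: fin measure_def)
  also have "\<dots> = enn2real (\<Sum>i\<in>H0. \<Phi> i)" by (simp add: em)
  also have "\<dots> \<le> \<alpha> * real n" using bound \<alpha> by (intro enn2real_leI) auto
  finally have S: "(\<Sum>i\<in>H0. measure (unit_law KA KB (muA i) (sA i) (muB i) (sB i)) E) \<le> \<alpha> * real n" .
  show ?thesis
  proof (cases "n = 0")
    case True then show ?thesis using \<alpha> by simp
  next
    case False
    then have "(1 / real n) * (\<Sum>i\<in>H0. measure (unit_law KA KB (muA i) (sA i) (muB i) (sB i)) E) \<le> (1 / real n) * (\<alpha> * real n)"
      using S by (intro mult_left_mono) auto
    also have "\<dots> = \<alpha>" using False by simp
    finally show ?thesis unfolding H0_def E_def lamv_def .
  qed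
qed


end
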